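(* Let $\mathcal{P}$ be a hereditary property of ordered graphs and $k$ a positive integer, and suppose that there are ordered graphs $G \in \mathcal{P}$ for which $t_{k+1}$, the size of the $(k+1)$-st largest homogeneous block of $G$, is arbitrarily large. Then $|\mathcal{P}_n| \geqslant \binom{n-3k-2}{k} = n^k/k! + O(n^{k-1})$ as $n \to \infty$, and in particular if $k = 1$, then $|\mathcal{P}_n| \geqslant n$ for every $n \in \mathbb{N}$.
   Context: Ordered graphs of order $n$ have vertex set $[n]$ with the natural order; a hereditary property is a collection of ordered graphs closed under order-preserving isomorphism and induced ordered subgraphs; $\mathcal{P}_n$ is the set of members with vertex set $[n]$. A homogeneous block of $G$ is a maximal set $B$ of consecutive vertices such that $\Gamma(x)\setminus\{y\}=\Gamma(y)\setminus\{x\}$ for all $x,y\in B$; the homogeneous block sequence $t_1\geqslant t_2\geqslant\dots$ lists the orders of the homogeneous blocks in non-increasing order (padded with zeros). *)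

theory Defs
  imports Main "HOL-Library.Multiset"
begin

text \<open>An ordered graph of order n: vertex set [n] = {1..n} with its natural order,
  represented as the pair (n, E) where E is a set of 2-element subsets of {1..n}.\<close>
type_synonym ograph = "nat \<times> nat set set"

definition ordered_graph :: "ograph \<Rightarrow> bool" where
  "ordered_graph G \<longleftrightarrow>
     (\<forall>e \<in> snd G. \<exists>x y. e = {x, y} \<and> x \<noteq> y \<and> x \<in> {1..fst G} \<and> y \<in> {1..fst G})"

definition induced_ordered_subgraph :: "ograph \<Rightarrow> ograph \<Rightarrow> bool" where
  "induced_ordered_subgraph H G \<longleftrightarrow>
     (\<exists>f. strict_mono_on {1..fst H} f \<and> f ` {1..fst H} \<subseteq> {1..fst G} \<and>
          (\<forall>i \<in> {1..fst H}. \<forall>j \<in> {1..fst H}. {i, j} \<in> snd H \<longleftrightarrow> {f i, f j} \<in> snd G))"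

text \<open>Since every graph has canonical vertex set [n], closure under order-preserving
  isomorphism is automatic; hereditary = closed under induced ordered subgraphs.\<close>
definition hereditary :: "ograph set \<Rightarrow> bool" where
  "hereditary P \<longleftrightarrow>
     (\<forall>G \<in> P. ordered_graph G) \<and>
     (\<forall>G \<in> P. \<forall>H. ordered_graph H \<and> induced_ordered_subgraph H G \<longrightarrow> H \<in> P)"

definition slice :: "ograph set \<Rightarrow> nat \<Rightarrow> nat set set set" where
  "slice P n = {E. (n, E) \<in> P}"

definition nbhd :: "ograph \<Rightarrow> nat \<Rightarrow> nat set" where
  "nbhd G x = {y. {x, y} \<in> snd G}"

definition homogeneous_set :: "ograph \<Rightarrow> nat set \<Rightarrow> bool" where
  "homogeneous_set G B \<longleftrightarrow>
     (\<exists>a b. a \<le> b \<and> B = {a..b} \<and> B \<subseteq> {1..fst G}) \<and>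
     (\<forall>x \<in> B. \<forall>y \<in> B. nbhd G x - {y} = nbhd G y - {x})"

definition homogeneous_blocks :: "ograph \<Rightarrow> nat set set" where
  "homogeneous_blocks G =
     {B. homogeneous_set G B \<and> (\<forall>B'. homogeneous_set G B' \<and> B \<subseteq> B' \<longrightarrow> B' = B)}"

text \<open>Homogeneous block sequence: block orders in non-increasing order, padded with zeros.
  hb_seq G i is t_i (1-indexed).\<close>
definition hb_seq :: "ograph \<Rightarrow> nat \<Rightarrow> nat" where
  "hb_seq G i =
     (let l = rev (sorted_list_of_multiset (image_mset card (mset_set (homogeneous_blocks G))))
      in if 1 \<le> i \<and> i \<le> length l then l ! (i - 1) else 0)"

end

theory Submission
  imports Defs
begin



definition tw :: "ograph \<Rightarrow> nat \<Rightarrow> nat \<Rightarrow> bool" where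
  "tw G x y \<longleftrightarrow> (\<forall>z. z \<noteq> x \<longrightarrow> z \<noteq> y \<longrightarrow> ({x,z} \<in> snd G \<longleftrightarrow> {y,z} \<in> snd G))"

definition hom :: "ograph \<Rightarrow> nat \<Rightarrow> nat \<Rightarrow> bool" where
  "hom G a b \<longleftrightarrow> (\<forall>x\<in>{a..b}. \<forall>y\<in>{a..b}. tw G x y)"

definition pos :: "nat set \<Rightarrow> nat \<Rightarrow> nat" where
  "pos S y = card (S \<inter> {..y})"

definition EG :: "ograph \<Rightarrow> nat set \<Rightarrow> nat set set" where
  "EG G S = {{pos S x, pos S y} | x y. x \<in> S \<and> y \<in> S \<and> {x,y} \<in> snd G}"

lemma pos_less:
  assumes "finite S" "x \<in> S" "y \<in> S" "x < y"
  shows "pos S x < pos S y"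
proof -
  have "y \<in> S \<inter> {..y}" "y \<notin> S \<inter> {..x}" using assms by auto
  moreover have "S \<inter> {..x} \<subseteq> S \<inter> {..y}" using assms by auto
  ultimately have "S \<inter> {..x} \<subset> S \<inter> {..y}" by blast
  then show ?thesis unfolding pos_def using assms(1) by (simp add: psubset_card_mono)
qed

lemma pos_inj:
  assumes "finite S" "x \<in> S" "y \<in> S" "pos S x = pos S y"
  shows "x = y"
  using pos_less[OF assms(1,2,3)] pos_less[OF assms(1,3,2)] assms(4)
  by (metis less_irrefl linorder_neqE_nat)

lemma pos_ge1:
  assumes "finite S" "y \<in> S" shows "1 \<le> pos S y"
proof -
  have "S \<inter> {..y} \<noteq> {}" using assms by auto
  then show ?thesis unfolding pos_def using assms(1)
    by (simp add: Suc_leI card_gt_0_iff)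
qed

lemma pos_le_card:
  assumes "finite S" shows "pos S y \<le> card S"
  unfolding pos_def using assms by (intro card_mono) auto

lemma pos_image:
  assumes "finite S" shows "pos S ` S = {1..card S}"
proof -
  have sub: "pos S ` S \<subseteq> {1..card S}" using pos_ge1[OF assms] pos_le_card[OF assms] by auto
  have inj: "inj_on (pos S) S" using pos_inj[OF assms] by (meson inj_onI)
  have "card (pos S ` S) = card {1..card S}" using card_image[OF inj] by simp
  then show ?thesis using sub by (intro card_subset_eq) auto
qed

lemma pos_surj:
  assumes "finite S" "1 \<le> p" "p \<le> card S"
  shows "\<exists>y\<in>S. pos S y = p"
  using pos_image[OF assms(1)] assms(2,3) by (metis atLeastAtMost_iff imageE)

lemma EG_mem:
  assumes "finite S" "x \<in> S" "y \<in> S"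
  shows "{pos S x, pos S y} \<in> EG G S \<longleftrightarrow> {x,y} \<in> snd G"
proof
  assume "{x,y} \<in> snd G" then show "{pos S x, pos S y} \<in> EG G S"
    unfolding EG_def using assms by blast
next
  assume "{pos S x, pos S y} \<in> EG G S"
  then obtain x' y' where xy': "{pos S x, pos S y} = {pos S x', pos S y'}" "x' \<in> S" "y' \<in> S"
    "{x',y'} \<in> snd G" unfolding EG_def by blast
  from xy'(1) have "(pos S x = pos S x' \<and> pos S y = pos S y') \<or> (pos S x = pos S y' \<and> pos S y = pos S x')"
    by (simp add: doubleton_eq_iff)
  then have "(x = x' \<and> y = y') \<or> (x = y' \<and> y = x')"
    using pos_inj[OF assms(1)] assms xy' by metis
  then show "{x,y} \<in> snd G" using xy'(4) by (auto simp: insert_commute)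
qed

lemma EG_transfer:
  assumes "EG G S = EG G S'" "finite S" "finite S'" "x \<in> S" "y \<in> S" "x' \<in> S'" "y' \<in> S'"
    "pos S x = pos S' x'" "pos S y = pos S' y'"
  shows "{x,y} \<in> snd G \<longleftrightarrow> {x',y'} \<in> snd G"
  using EG_mem[OF assms(2,4,5), of G] EG_mem[OF assms(3,6,7), of G] assms(1,8,9) by simp

lemma ordered_graph_edge:
  assumes "ordered_graph G" "{x,y} \<in> snd G"
  shows "x \<noteq> y" "x \<in> {1..fst G}" "y \<in> {1..fst G}"
proof -
  obtain a b where ab: "{x,y} = {a,b}" "a \<noteq> b" "a \<in> {1..fst G}" "b \<in> {1..fst G}"
    using assms unfolding ordered_graph_def by blast
  then show "x \<noteq> y" "x \<in> {1..fst G}" "y \<in> {1..fst G}" by (auto simp: doubleton_eq_iff)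
qed

lemma EG_in_P:
  assumes her: "hereditary P" and GP: "G \<in> P" and sub: "S \<subseteq> {1..fst G}"
  shows "(card S, EG G S) \<in> P"
proof -
  have og: "ordered_graph G" using her GP unfolding hereditary_def by blast
  have fin: "finite S" using sub finite_subset by blast
  define n where "n = card S"
  have inj: "inj_on (pos S) S" using pos_inj[OF fin] by (meson inj_onI)
  define f where "f = the_inv_into S (pos S)"
  have fS: "f p \<in> S" and pf: "pos S (f p) = p" if "p \<in> {1..n}" for p
  proof -
    have "p \<in> pos S ` S" using pos_image[OF fin] that n_def by simp
    then show "f p \<in> S" "pos S (f p) = p" unfolding f_def
      using the_inv_into_into[OF inj] f_the_inv_into_f[OF inj] by auto
  qed
  have ogH: "ordered_graph (n, EG G S)"
    unfolding ordered_graph_def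
  proof
    fix e assume "e \<in> snd (n, EG G S)"
    then obtain x y where e: "e = {pos S x, pos S y}" "x \<in> S" "y \<in> S" "{x,y} \<in> snd G"
      unfolding EG_def by auto
    have "x \<noteq> y" using ordered_graph_edge[OF og e(4)] by simp
    then have "pos S x \<noteq> pos S y" using pos_inj[OF fin] e by metis
    moreover have "pos S x \<in> {1..n}" "pos S y \<in> {1..n}"
      using pos_ge1[OF fin] pos_le_card[OF fin] e n_def by auto
    ultimately show "\<exists>x y. e = {x, y} \<and> x \<noteq> y \<and> x \<in> {1..fst (n, EG G S)} \<and> y \<in> {1..fst (n, EG G S)}"
      using e by auto
  qed
  have ind: "induced_ordered_subgraph (n, EG G S) G"
    unfolding induced_ordered_subgraph_def
  proof (intro exI conjI)
    show "strict_mono_on {1..fst (n, EG G S)} f"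
    proof (rule strict_mono_onI)
      fix p q assume pq: "p \<in> {1..fst (n, EG G S)}" "q \<in> {1..fst (n, EG G S)}" "p < q"
      show "f p < f q"
      proof (rule ccontr)
        assume "\<not> f p < f q"
        then have "f q \<le> f p" by simp
        then have "pos S (f q) \<le> pos S (f p)"
        proof (cases "f q = f p")
          case False
          then show ?thesis using pos_less[OF fin, of "f q" "f p"] fS pq \<open>f q \<le> f p\<close> by simp
        qed simp
        then show False using pf pq by simp
      qed
    qed
    show "f ` {1..fst (n, EG G S)} \<subseteq> {1..fst G}" using fS sub by auto
    show "\<forall>i\<in>{1..fst (n, EG G S)}. \<forall>j\<in>{1..fst (n, EG G S)}. ({i, j} \<in> snd (n, EG G S)) = ({f i, f j} \<in> snd G)"
    proof (intro ballI)
      fix i j assume ij: "i \<in> {1..fst (n, EG G S)}" "j \<in> {1..fst (n, EG G S)}"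
      have "{pos S (f i), pos S (f j)} \<in> EG G S \<longleftrightarrow> {f i, f j} \<in> snd G"
        using EG_mem[OF fin fS fS] ij by simp
      then show "({i, j} \<in> snd (n, EG G S)) = ({f i, f j} \<in> snd G)" using pf ij by simp
    qed
  qed
  show ?thesis using her GP ogH ind unfolding hereditary_def n_def by blast
qed

lemma dec:
  assumes eq: "EG G S = EG G S'" and fin: "finite S" "finite S'" and cd: "card S = card S'"
    and h: "hom G lo hi"
    and xyz: "x \<in> S" "y \<in> S" "z \<in> S" "z \<noteq> x" "z \<noteq> y"
    and wit: "({x,z} \<in> snd G) \<noteq> ({y,z} \<in> snd G)"
    and c1: "card (S' \<inter> {..<lo}) < pos S x" "card (S' \<inter> {..<lo}) < pos S y"
    and c2: "pos S x \<le> card (S' \<inter> {..hi})" "pos S y \<le> card (S' \<inter> {..hi})"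
  shows False
proof -
  have inr: "\<exists>u'\<in>S'. pos S' u' = pos S u \<and> lo \<le> u' \<and> u' \<le> hi"
    if uS: "u \<in> S" and uc: "card (S' \<inter> {..<lo}) < pos S u" "pos S u \<le> card (S' \<inter> {..hi})" for u
  proof -
    obtain u' where u': "u' \<in> S'" "pos S' u' = pos S u"
      using pos_surj[OF fin(2), of "pos S u"] pos_ge1[OF fin(1) uS] pos_le_card[OF fin(1), of u] cd
      by auto
    have "lo \<le> u'"
    proof (rule ccontr)
      assume "\<not> lo \<le> u'"
      then have "S' \<inter> {..u'} \<subseteq> S' \<inter> {..<lo}" by auto
      then have "pos S' u' \<le> card (S' \<inter> {..<lo})" unfolding pos_def
        using fin(2) by (intro card_mono) auto
      then show False using u' uc by simp
    qed
    moreover have "u' \<le> hi"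
    proof (rule ccontr)
      assume "\<not> u' \<le> hi"
      then have "S' \<inter> {..hi} \<subset> S' \<inter> {..u'}" using u' by auto
      then have "card (S' \<inter> {..hi}) < pos S' u'" unfolding pos_def
        using fin(2) by (intro psubset_card_mono) auto
      then show False using u' uc by simp
    qed
    ultimately show ?thesis using u' by blast
  qed
  obtain x' where x': "x' \<in> S'" "pos S' x' = pos S x" "lo \<le> x'" "x' \<le> hi" using inr xyz c1 c2 by blast
  obtain y' where y': "y' \<in> S'" "pos S' y' = pos S y" "lo \<le> y'" "y' \<le> hi" using inr xyz c1 c2 by blast
  obtain z' where z': "z' \<in> S'" "pos S' z' = pos S z"
    using pos_surj[OF fin(2), of "pos S z"] pos_ge1[OF fin(1) xyz(3)] pos_le_card[OF fin(1), of z] cd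
    by auto
  have "pos S z \<noteq> pos S x" "pos S z \<noteq> pos S y" using pos_inj[OF fin(1)] xyz by metis+
  then have "z' \<noteq> x'" "z' \<noteq> y'" using x' y' z' by auto
  have "tw G x' y'" using h x' y' unfolding hom_def by auto
  then have "{x',z'} \<in> snd G \<longleftrightarrow> {y',z'} \<in> snd G" using \<open>z' \<noteq> x'\<close> \<open>z' \<noteq> y'\<close> unfolding tw_def by blast
  moreover have "{x,z} \<in> snd G \<longleftrightarrow> {x',z'} \<in> snd G"
    using EG_transfer[OF eq fin xyz(1,3) x'(1) z'(1)] x' z' by simp
  moreover have "{y,z} \<in> snd G \<longleftrightarrow> {y',z'} \<in> snd G"
    using EG_transfer[OF eq fin xyz(2,3) y'(1) z'(1)] y' z' by simp
  ultimately show False using wit by simp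
qed




lemma tw_sym: "tw G x y \<longleftrightarrow> tw G y x"
  unfolding tw_def by blast

lemma tw_refl: "tw G x x"
  unfolding tw_def by blast

lemma tw_nbhd:
  assumes "ordered_graph G"
  shows "tw G x y \<longleftrightarrow> nbhd G x - {y} = nbhd G y - {x}"
proof
  assume t: "tw G x y"
  show "nbhd G x - {y} = nbhd G y - {x}"
  proof (intro set_eqI iffI)
    fix z assume "z \<in> nbhd G x - {y}"
    then have z: "{x,z} \<in> snd G" "z \<noteq> y" unfolding nbhd_def by auto
    then have "z \<noteq> x" using ordered_graph_edge[OF assms] by blast
    then show "z \<in> nbhd G y - {x}" using t z unfolding tw_def nbhd_def by auto
  next
    fix z assume "z \<in> nbhd G y - {x}"
    then have z: "{y,z} \<in> snd G" "z \<noteq> x" unfolding nbhd_def by auto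
    then have "z \<noteq> y" using ordered_graph_edge[OF assms] by blast
    then show "z \<in> nbhd G x - {y}" using t z unfolding tw_def nbhd_def by auto
  qed
next
  assume e: "nbhd G x - {y} = nbhd G y - {x}"
  show "tw G x y" unfolding tw_def
  proof (intro allI impI)
    fix z assume "z \<noteq> x" "z \<noteq> y"
    then have "z \<in> nbhd G x - {y} \<longleftrightarrow> z \<in> nbhd G y - {x}" using e by simp
    then show "{x, z} \<in> snd G \<longleftrightarrow> {y, z} \<in> snd G" using \<open>z \<noteq> x\<close> \<open>z \<noteq> y\<close> unfolding nbhd_def by auto
  qed
qed

lemma hs_iff:
  assumes "ordered_graph G"
  shows "homogeneous_set G B \<longleftrightarrow> (\<exists>a b. a \<le> b \<and> B = {a..b} \<and> B \<subseteq> {1..fst G}) \<and> (\<forall>x\<in>B. \<forall>y\<in>B. tw G x y)"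
  unfolding homogeneous_set_def using tw_nbhd[OF assms] by auto

lemma tw_union:
  assumes B: "\<forall>x\<in>B. \<forall>y\<in>B. tw G x y" and B': "\<forall>x\<in>B'. \<forall>y\<in>B'. tw G x y"
    and c: "c \<in> B" "c \<in> B'" and x: "x \<in> B" and y: "y \<in> B'"
  shows "tw G x y"
proof (cases "x = c \<or> y = c \<or> x = y")
  case True then show ?thesis using B B' c x y tw_refl by auto
next
  case False
  then have xc: "x \<noteq> c" "y \<noteq> c" and "x \<noteq> y" by auto
  show ?thesis unfolding tw_def
  proof (intro allI impI)
    fix z assume z: "z \<noteq> x" "z \<noteq> y"
    show "{x, z} \<in> snd G \<longleftrightarrow> {y, z} \<in> snd G"
    proof (cases "z = c")
      case True
      have t1: "tw G c y" using B' c y by auto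
      have t2: "tw G x c" using B c x by auto
      have "{c,x} \<in> snd G \<longleftrightarrow> {y,x} \<in> snd G" using t1 xc \<open>x \<noteq> y\<close> unfolding tw_def by metis
      moreover have "{x,y} \<in> snd G \<longleftrightarrow> {c,y} \<in> snd G" using t2 xc \<open>x \<noteq> y\<close> unfolding tw_def by metis
      ultimately show ?thesis using True by (simp add: insert_commute)
    next
      case False
      have "{x,z} \<in> snd G \<longleftrightarrow> {c,z} \<in> snd G" using B c x z False unfolding tw_def by metis
      moreover have "{c,z} \<in> snd G \<longleftrightarrow> {y,z} \<in> snd G" using B' c y z False unfolding tw_def by metis
      ultimately show ?thesis by simp
    qed
  qed
qed

lemma block_props:
  assumes og: "ordered_graph G" and B: "B \<in> homogeneous_blocks G"
  obtains a b where "a \<le> b" "B = {a..b}" "B \<subseteq> {1..fst G}" "hom G a b"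
    "\<And>B'. homogeneous_set G B' \<Longrightarrow> B \<subseteq> B' \<Longrightarrow> B' = B"
proof -
  have hs: "homogeneous_set G B" and mx: "\<And>B'. homogeneous_set G B' \<Longrightarrow> B \<subseteq> B' \<Longrightarrow> B' = B"
    using B unfolding homogeneous_blocks_def by auto
  obtain a b where ab: "a \<le> b" "B = {a..b}" "B \<subseteq> {1..fst G}" and t: "\<forall>x\<in>B. \<forall>y\<in>B. tw G x y"
    using hs hs_iff[OF og] by auto
  have "hom G a b" using t ab unfolding hom_def by auto
  then show ?thesis using that ab mx by blast
qed




lemma blocks_disjoint:
  assumes og: "ordered_graph G" and B: "B \<in> homogeneous_blocks G" and B': "B' \<in> homogeneous_blocks G"
    and ne: "B \<inter> B' \<noteq> {}"
  shows "B = B'"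
proof -
  obtain a b where ab: "a \<le> b" "B = {a..b}" "B \<subseteq> {1..fst G}" "hom G a b"
    and mx: "\<And>B''. homogeneous_set G B'' \<Longrightarrow> B \<subseteq> B'' \<Longrightarrow> B'' = B"
    using block_props[OF og B] by blast
  obtain a' b' where ab': "a' \<le> b'" "B' = {a'..b'}" "B' \<subseteq> {1..fst G}" "hom G a' b'"
    and mx': "\<And>B''. homogeneous_set G B'' \<Longrightarrow> B' \<subseteq> B'' \<Longrightarrow> B'' = B'"
    using block_props[OF og B'] by blast
  obtain c where c: "c \<in> B" "c \<in> B'" using ne by blast
  have U: "B \<union> B' = {min a a'..max b b'}" using ab ab' c by auto
  have tB: "\<forall>x\<in>B. \<forall>y\<in>B. tw G x y" using ab unfolding hom_def by auto
  have tB': "\<forall>x\<in>B'. \<forall>y\<in>B'. tw G x y" using ab' unfolding hom_def by auto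
  have tU: "\<forall>x\<in>B \<union> B'. \<forall>y\<in>B \<union> B'. tw G x y"
  proof (intro ballI)
    fix x y assume "x \<in> B \<union> B'" "y \<in> B \<union> B'"
    then show "tw G x y"
      using tw_union[OF tB tB' c] tw_union[OF tB' tB c(2) c(1)] tB tB' by (auto simp: tw_sym)
  qed
  have "homogeneous_set G (B \<union> B')"
  proof -
    have "min a a' \<le> max b b'" "B \<union> B' \<subseteq> {1..fst G}" using ab ab' by auto
    then show ?thesis unfolding hs_iff[OF og] using U tU by blast
  qed
  then have "B \<union> B' = B" "B \<union> B' = B'" using mx mx' by auto
  then show ?thesis by auto
qed




lemma hb_many:
  assumes "m \<le> hb_seq G (k+1)" "1 \<le> m"
  shows "k+1 \<le> card {B \<in> homogeneous_blocks G. m \<le> card B}"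
proof -
  define HB where "HB = homogeneous_blocks G"
  define Ms where "Ms = image_mset card (mset_set HB)"
  define xs where "xs = sorted_list_of_multiset Ms"
  define l where "l = rev xs"
  have h: "hb_seq G (k+1) = (if 1 \<le> k+1 \<and> k+1 \<le> length l then l ! k else 0)"
    unfolding hb_seq_def l_def xs_def Ms_def HB_def by (simp add: Let_def)
  have len: "k+1 \<le> length l" and lk: "m \<le> l ! k"
    using assms h by (auto split: if_splits)
  have sx: "sorted xs" unfolding xs_def by simp
  have "\<forall>j\<le>k. m \<le> l ! j"
  proof (intro allI impI)
    fix j assume "j \<le> k"
    have "l ! j = xs ! (length xs - Suc j)" "l ! k = xs ! (length xs - Suc k)"
      using len \<open>j \<le> k\<close> unfolding l_def by (auto simp: rev_nth)
    moreover have "xs ! (length xs - Suc k) \<le> xs ! (length xs - Suc j)"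
      using sx len \<open>j \<le> k\<close> unfolding l_def by (intro sorted_nth_mono) auto
    ultimately show "m \<le> l ! j" using lk by simp
  qed
  then have "{0..k} \<subseteq> {j. j < length l \<and> m \<le> l ! j}" using len by auto
  then have "card {0..k} \<le> card {j. j < length l \<and> m \<le> l ! j}"
    by (intro card_mono) auto
  then have "k+1 \<le> card {j. j < length l \<and> m \<le> l ! j}" by simp
  also have "\<dots> = length (filter (\<lambda>x. m \<le> x) l)" by (simp add: length_filter_conv_card)
  also have "\<dots> = size (filter_mset (\<lambda>x. m \<le> x) Ms)"
  proof -
    have "mset (filter (\<lambda>x. m \<le> x) l) = filter_mset (\<lambda>x. m \<le> x) Ms"
      unfolding l_def xs_def by simp
    then show ?thesis by (metis size_mset)
  qed
  finally have A: "k+1 \<le> size (filter_mset (\<lambda>x. m \<le> x) Ms)" .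
  show ?thesis
  proof (cases "finite HB")
    case True
    have "filter_mset (\<lambda>x. m \<le> x) Ms = image_mset card (mset_set {B\<in>HB. m \<le> card B})"
      unfolding Ms_def filter_mset_image_mset using True by simp
    then show ?thesis using A HB_def by simp
  next
    case False
    then have "Ms = {#}" unfolding Ms_def by simp
    then show ?thesis using A by simp
  qed
qed




lemma order_blocks:
  fixes \<B> :: "nat set set"
  assumes "finite \<B>" "\<forall>B\<in>\<B>. \<exists>a b. a \<le> b \<and> B = {a..b}"
    "\<forall>B\<in>\<B>. \<forall>B'\<in>\<B>. B \<noteq> B' \<longrightarrow> B \<inter> B' = {}"
  shows "\<exists>lo hi. (\<forall>j<card \<B>. lo j \<le> hi j \<and> {lo j..hi j} \<in> \<B>) \<and> (\<forall>j. Suc j < card \<B> \<longrightarrow> hi j < lo (Suc j))"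
  using assms
proof (induction "card \<B>" arbitrary: \<B>)
  case 0
  then show ?case by auto
next
  case (Suc r)
  then have ne: "\<B> \<noteq> {}" by auto
  define \<mu> where "\<mu> = Max (Min ` \<B>)"
  have "\<mu> \<in> Min ` \<B>" unfolding \<mu>_def using Suc.prems(1) ne by (intro Max_in) auto
  then obtain Bs where Bs: "Bs \<in> \<B>" "Min Bs = \<mu>" by auto
  obtain as bs where asbs: "as \<le> bs" "Bs = {as..bs}" using Suc.prems(2) Bs by blast
  have mB: "Min B \<le> \<mu>" if "B \<in> \<B>" for B unfolding \<mu>_def using Suc.prems(1) that by (intro Max_ge) auto
  define \<B>' where "\<B>' = \<B> - {Bs}"
  have c': "r = card \<B>'" using Suc.hyps(2) Bs Suc.prems(1) unfolding \<B>'_def by simp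
  obtain lo hi where IH: "\<forall>j<card \<B>'. lo j \<le> hi j \<and> {lo j..hi j} \<in> \<B>'"
    "\<forall>j. Suc j < card \<B>' \<longrightarrow> hi j < lo (Suc j)"
    using Suc.hyps(1)[OF c'] Suc.prems unfolding \<B>'_def by auto
  define lo' where "lo' = lo(r := as)"
  define hi' where "hi' = hi(r := bs)"
  show ?case
  proof (intro exI conjI allI impI)
    fix j assume j: "j < card \<B>"
    show "lo' j \<le> hi' j" using IH j asbs c' Suc.hyps(2) unfolding lo'_def hi'_def by (cases "j = r") auto
    show "{lo' j..hi' j} \<in> \<B>" using IH j asbs Bs c' Suc.hyps(2) unfolding lo'_def hi'_def \<B>'_def
      by (cases "j = r") auto
  next
    fix j assume j: "Suc j < card \<B>"
    show "hi' j < lo' (Suc j)"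
    proof (cases "Suc j = r")
      case False
      then show ?thesis using IH j c' Suc.hyps(2) unfolding lo'_def hi'_def by auto
    next
      case True
      have jr: "j < card \<B>'" using True c' by simp
      have B1: "{lo j..hi j} \<in> \<B>" "{lo j..hi j} \<noteq> Bs" "lo j \<le> hi j" using IH jr unfolding \<B>'_def by auto
      have disj: "{lo j..hi j} \<inter> Bs = {}" using Suc.prems(3) B1 Bs by blast
      have "Min {lo j..hi j} \<le> \<mu>" using mB B1 by blast
      moreover have "Min {lo j..hi j} = lo j" using B1 by (intro Min_eqI) auto
      moreover have "Min Bs = as" using asbs by (intro Min_eqI) auto
      ultimately have "lo j \<le> as" using Bs by simp
      have "hi j < as"
      proof (rule ccontr)
        assume "\<not> hi j < as"
        then have "as \<in> {lo j..hi j}" using \<open>lo j \<le> as\<close> by simp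
        moreover have "as \<in> Bs" using asbs by simp
        ultimately show False using disj by blast
      qed
      then show ?thesis using True unfolding lo'_def hi'_def by simp
    qed
  qed
qed




lemma extract_blocks:
  assumes her: "hereditary P" and hb: "\<forall>m. \<exists>G\<in>P. hb_seq G (k+1) \<ge> m" and m1: "1 \<le> m"
  shows "\<exists>G\<in>P. ordered_graph G \<and> (\<exists>lo hi. (\<forall>j\<le>k. 1 \<le> lo j \<and> lo j \<le> hi j \<and> hi j \<le> fst G \<and>
            hom G (lo j) (hi j) \<and> m \<le> Suc (hi j) - lo j) \<and>
          (\<forall>j<k. hi j < lo (Suc j) \<and> \<not> hom G (lo j) (Suc (hi j))))"
proof -
  obtain G where GP: "G \<in> P" and hG: "m \<le> hb_seq G (k+1)" using hb by blast
  have og: "ordered_graph G" using her GP unfolding hereditary_def by blast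
  define HB where "HB = homogeneous_blocks G"
  have "k+1 \<le> card {B \<in> HB. m \<le> card B}" using hb_many[OF hG m1] HB_def by simp
  then obtain \<B> where BB: "\<B> \<subseteq> {B \<in> HB. m \<le> card B}" "card \<B> = k+1" "finite \<B>"
    by (meson obtain_subset_with_card_n)
  have intv: "\<forall>B\<in>\<B>. \<exists>a b. a \<le> b \<and> B = {a..b}"
  proof
    fix B assume "B \<in> \<B>"
    then have "B \<in> homogeneous_blocks G" using BB HB_def by auto
    then show "\<exists>a b. a \<le> b \<and> B = {a..b}" using block_props[OF og] by metis
  qed
  have disj: "\<forall>B\<in>\<B>. \<forall>B'\<in>\<B>. B \<noteq> B' \<longrightarrow> B \<inter> B' = {}"
  proof (intro ballI impI)
    fix B B' assume "B \<in> \<B>" "B' \<in> \<B>" "B \<noteq> B'"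
    then have "B \<in> homogeneous_blocks G" "B' \<in> homogeneous_blocks G" using BB HB_def by auto
    then show "B \<inter> B' = {}" using blocks_disjoint[OF og] \<open>B \<noteq> B'\<close> by metis
  qed
  obtain lo hi where LH: "\<forall>j<card \<B>. lo j \<le> hi j \<and> {lo j..hi j} \<in> \<B>"
    "\<forall>j. Suc j < card \<B> \<longrightarrow> hi j < lo (Suc j)"
    using order_blocks[OF BB(3) intv disj] by blast
  have props: "1 \<le> lo j \<and> lo j \<le> hi j \<and> hi j \<le> fst G \<and> hom G (lo j) (hi j) \<and> m \<le> Suc (hi j) - lo j
       \<and> (\<forall>B'. homogeneous_set G B' \<and> {lo j..hi j} \<subseteq> B' \<longrightarrow> B' = {lo j..hi j})" if "j \<le> k" for j
  proof -
    have j: "lo j \<le> hi j" "{lo j..hi j} \<in> \<B>" using LH that BB by auto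
    then have blk: "{lo j..hi j} \<in> homogeneous_blocks G" "m \<le> card {lo j..hi j}"
      using BB HB_def by auto
    obtain a b where ab: "a \<le> b" "{lo j..hi j} = {a..b}" "{lo j..hi j} \<subseteq> {1..fst G}" "hom G a b"
      "\<And>B'. homogeneous_set G B' \<Longrightarrow> {lo j..hi j} \<subseteq> B' \<Longrightarrow> B' = {lo j..hi j}"
      using block_props[OF og blk(1)] by metis
    have "hom G (lo j) (hi j)" using ab(4) unfolding hom_def ab(2) .
    moreover have "1 \<le> lo j" "hi j \<le> fst G" using ab(3) j by auto
    moreover have "m \<le> Suc (hi j) - lo j" using blk(2) by simp
    moreover have "\<forall>B'. homogeneous_set G B' \<and> {lo j..hi j} \<subseteq> B' \<longrightarrow> B' = {lo j..hi j}"
      using ab(5) by blast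
    ultimately show ?thesis using j by blast
  qed
  have main: "(\<forall>j\<le>k. 1 \<le> lo j \<and> lo j \<le> hi j \<and> hi j \<le> fst G \<and>
            hom G (lo j) (hi j) \<and> m \<le> Suc (hi j) - lo j) \<and>
          (\<forall>j<k. hi j < lo (Suc j) \<and> \<not> hom G (lo j) (Suc (hi j)))"
  proof (intro conjI allI impI)
    fix j assume "j \<le> k"
    then show "1 \<le> lo j" "lo j \<le> hi j" "hi j \<le> fst G" "hom G (lo j) (hi j)" "m \<le> Suc (hi j) - lo j"
      using props by auto
  next
    fix j assume jk: "j < k"
    show "hi j < lo (Suc j)" using LH BB jk by auto
    show "\<not> hom G (lo j) (Suc (hi j))"
    proof
      assume h: "hom G (lo j) (Suc (hi j))"
      have p0: "1 \<le> lo j" "lo j \<le> hi j" and mx: "\<forall>B'. homogeneous_set G B' \<and> {lo j..hi j} \<subseteq> B' \<longrightarrow> B' = {lo j..hi j}"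
        using props jk by auto
      have "hi (Suc j) \<le> fst G" "lo (Suc j) \<le> hi (Suc j)" using props jk by auto
      then have "Suc (hi j) \<le> fst G" using \<open>hi j < lo (Suc j)\<close> by simp
      then have "homogeneous_set G {lo j..Suc (hi j)}"
        unfolding hs_iff[OF og] using h p0 unfolding hom_def by auto
      then have "{lo j..Suc (hi j)} = {lo j..hi j}" using mx by auto
      moreover have "Suc (hi j) \<in> {lo j..Suc (hi j)}" "Suc (hi j) \<notin> {lo j..hi j}" using p0 by auto
      ultimately show False by simp
    qed
  qed
  show ?thesis using main GP og by blast
qed




lemma nonhom_witness:
  assumes "hom G lo hi" "\<not> hom G lo (Suc hi)"
  shows "\<exists>x0 w. x0 \<in> {lo..hi} \<and> w \<noteq> x0 \<and> w \<noteq> Suc hi \<and> ({x0,w} \<in> snd G) \<noteq> ({Suc hi, w} \<in> snd G)"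
proof -
  obtain x y where xy: "x \<in> {lo..Suc hi}" "y \<in> {lo..Suc hi}" "\<not> tw G x y"
    using assms(2) unfolding hom_def by blast
  have "\<exists>x0\<in>{lo..hi}. \<not> tw G x0 (Suc hi)"
  proof (cases "x = Suc hi")
    case True
    then have "y \<noteq> Suc hi" using xy tw_refl by metis
    then show ?thesis using xy True tw_sym by (metis atLeastAtMost_iff le_SucE)
  next
    case False
    then have "x \<in> {lo..hi}" using xy by auto
    moreover have "y = Suc hi" using xy assms(1) \<open>x \<in> {lo..hi}\<close> unfolding hom_def
      by (metis atLeastAtMost_iff le_SucE)
    ultimately show ?thesis using xy by blast
  qed
  then obtain x0 where "x0 \<in> {lo..hi}" "\<not> tw G x0 (Suc hi)" by blast
  then show ?thesis unfolding tw_def by blast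
qed

lemma hom_out:
  assumes "hom G lo hi" "x \<in> {lo..hi}" "x' \<in> {lo..hi}" "w \<noteq> x" "w \<noteq> x'"
  shows "{x,w} \<in> snd G \<longleftrightarrow> {x',w} \<in> snd G"
  using assms unfolding hom_def tw_def by blast

lemma hom_in:
  assumes "hom G lo hi" "x \<in> {lo..hi}" "x' \<in> {lo..hi}" "y \<in> {lo..hi}" "y \<noteq> x" "y \<noteq> x'"
  shows "{y,x} \<in> snd G \<longleftrightarrow> {y,x'} \<in> snd G"
  using hom_out[OF assms(1,2,3), of y] assms(5,6) by (metis insert_commute)

lemma chain_order:
  fixes lo hi :: "nat \<Rightarrow> nat"
  assumes "\<forall>j<k. hi j < lo (Suc j)" "\<forall>j\<le>k. lo j \<le> hi j" "j < i" "i \<le> k"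
  shows "hi j < lo i"
  using assms(3,4)
proof (induction i)
  case 0 then show ?case by simp
next
  case (Suc i)
  show ?case
  proof (cases "j = i")
    case True then show ?thesis using assms(1) Suc by auto
  next
    case False
    then have "hi j < lo i" using Suc by auto
    moreover have "lo i \<le> hi i" using assms(2) Suc by auto
    moreover have "hi i < lo (Suc i)" using assms(1) Suc by auto
    ultimately show ?thesis by linarith
  qed
qed

lemma slice_finite:
  assumes "hereditary P" shows "finite (slice P n)"
proof -
  have "slice P n \<subseteq> Pow (Pow {1..n})"
  proof
    fix E assume "E \<in> slice P n"
    then have "ordered_graph (n, E)" using assms unfolding slice_def hereditary_def by auto
    then show "E \<in> Pow (Pow {1..n})" unfolding ordered_graph_def by fastforce
  qed
  then show ?thesis by (rule finite_subset) simp
qed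




definition beta :: "nat set \<Rightarrow> nat \<Rightarrow> nat" where
  "beta X s = card {x\<in>X. x < s}"

definition SX :: "(nat \<Rightarrow> nat \<Rightarrow> nat) \<Rightarrow> nat set \<Rightarrow> nat \<Rightarrow> nat set \<Rightarrow> nat set" where
  "SX \<pi> F M X = F \<union> (\<lambda>s. \<pi> (beta X s) s) ` {1..M}"

context
  fixes P :: "ograph set" and G :: ograph and k n M :: nat and lo hi x0 w :: "nat \<Rightarrow> nat"
    and F :: "nat set" and \<pi> :: "nat \<Rightarrow> nat \<Rightarrow> nat"
  assumes her: "hereditary P" and GP: "G \<in> P" and og: "ordered_graph G"
    and blk: "\<forall>j\<le>k. 1 \<le> lo j \<and> lo j \<le> hi j \<and> hi j \<le> fst G \<and> hom G (lo j) (hi j)"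
    and ordr: "\<forall>j<k. hi j < lo (Suc j)"
    and wit: "\<forall>j<k. x0 j \<in> {lo j..hi j} \<and> w j \<noteq> x0 j \<and> w j \<noteq> Suc (hi j) \<and>
                 ({x0 j, w j} \<in> snd G) \<noteq> ({Suc (hi j), w j} \<in> snd G)"
    and Fdef: "F = (\<lambda>j. Suc (hi j)) ` {..<k} \<union> w ` {..<k}"
    and FN: "F \<subseteq> {1..fst G}"
    and pool: "\<forall>j\<le>k. inj_on (\<pi> j) {1..M} \<and> \<pi> j ` {1..M} \<subseteq> {lo j..hi j} - F"
    and nM: "n = card F + M"
begin

abbreviation "XX \<equiv> {X. X \<subseteq> {1..M} \<and> card X = k}"

lemma finF: "finite F" using Fdef by simp

lemma bo: "j < i \<Longrightarrow> i \<le> k \<Longrightarrow> hi j < lo i"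
  using chain_order[of k hi lo j i] ordr blk by auto

lemma beta_le: "X \<in> XX \<Longrightarrow> beta X s \<le> k"
proof -
  assume X: "X \<in> XX"
  then have "finite X" using finite_subset by blast
  then have "beta X s \<le> card X" unfolding beta_def by (intro card_mono) auto
  then show ?thesis using X by simp
qed

lemma g_block:
  assumes "X \<in> XX" "s \<in> {1..M}"
  shows "\<pi> (beta X s) s \<in> {lo (beta X s)..hi (beta X s)} - F"
  using pool beta_le[OF assms(1)] assms(2) by blast

lemma g_hi:
  assumes "X \<in> XX" "s \<in> {1..M}" "i \<le> k"
  shows "\<pi> (beta X s) s \<le> hi i \<longleftrightarrow> beta X s \<le> i"
proof -
  define j where "j = beta X s"
  have g: "\<pi> j s \<in> {lo j..hi j}" "j \<le> k" using g_block[OF assms(1,2)] beta_le[OF assms(1)] j_def by auto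
  show ?thesis
  proof (cases "j \<le> i")
    case True
    then have "hi j \<le> hi i"
    proof (cases "j = i")
      case False
      then have "hi j < lo i" using bo True assms(3) by simp
      then show ?thesis using blk assms(3) by fastforce
    qed simp
    then show ?thesis using g True j_def by auto
  next
    case False
    then have "hi i < lo j" using bo g(2) by simp
    then show ?thesis using g False j_def by auto
  qed
qed

lemma g_lo:
  assumes "X \<in> XX" "s \<in> {1..M}" "i \<le> k"
  shows "\<pi> (beta X s) s < lo i \<longleftrightarrow> beta X s < i"
proof -
  define j where "j = beta X s"
  have g: "\<pi> j s \<in> {lo j..hi j}" "j \<le> k" using g_block[OF assms(1,2)] beta_le[OF assms(1)] j_def by auto
  show ?thesis
  proof (cases "j < i")
    case True
    then have "hi j < lo i" using bo assms(3) by simp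
    then show ?thesis using g True j_def by auto
  next
    case False
    then have "lo i \<le> lo j"
    proof (cases "j = i")
      case False
      then have "hi i < lo j" using bo \<open>\<not> j < i\<close> g(2) by simp
      then show ?thesis using blk assms(3) by fastforce
    qed simp
    then show ?thesis using g False j_def by auto
  qed
qed

lemma g_inj:
  assumes "X \<in> XX"
  shows "inj_on (\<lambda>s. \<pi> (beta X s) s) {1..M}"
proof (rule inj_onI)
  fix s s' assume s: "s \<in> {1..M}" "s' \<in> {1..M}" and eq: "\<pi> (beta X s) s = \<pi> (beta X s') s'"
  have "beta X s = beta X s'"
  proof (rule ccontr)
    assume ne: "beta X s \<noteq> beta X s'"
    have b: "beta X s \<le> k" "beta X s' \<le> k" using beta_le[OF assms] by auto
    have g1: "\<pi> (beta X s) s \<in> {lo (beta X s)..hi (beta X s)}" using g_block[OF assms s(1)] by auto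
    have g2: "\<pi> (beta X s') s' \<in> {lo (beta X s')..hi (beta X s')}" using g_block[OF assms s(2)] by auto
    show False
    proof (cases "beta X s < beta X s'")
      case True
      then have "hi (beta X s) < lo (beta X s')" using bo b by simp
      then show False using g1 g2 eq by auto
    next
      case False
      then have "hi (beta X s') < lo (beta X s)" using bo b ne by simp
      then show False using g1 g2 eq by auto
    qed
  qed
  moreover have "beta X s \<le> k" using beta_le[OF assms] by auto
  ultimately show "s = s'" using pool eq s by (metis inj_onD)
qed

lemma SX_inter:
  assumes "X \<in> XX"
  shows "card (SX \<pi> F M X \<inter> T) = card (F \<inter> T) + card {s\<in>{1..M}. \<pi> (beta X s) s \<in> T}"
proof -
  let ?g = "\<lambda>s. \<pi> (beta X s) s"
  have eq: "SX \<pi> F M X \<inter> T = (F \<inter> T) \<union> ?g ` {s\<in>{1..M}. ?g s \<in> T}"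
    unfolding SX_def by auto
  have disj: "(F \<inter> T) \<inter> ?g ` {s\<in>{1..M}. ?g s \<in> T} = {}"
    using g_block[OF assms] by auto
  have inj: "inj_on ?g {s\<in>{1..M}. ?g s \<in> T}"
    using g_inj[OF assms] by (rule inj_on_subset) auto
  show ?thesis unfolding eq
    using card_Un_disjoint[OF _ _ disj] finF card_image[OF inj] by simp
qed

lemma SX_props:
  assumes "X \<in> XX"
  shows "finite (SX \<pi> F M X)" "card (SX \<pi> F M X) = n" "SX \<pi> F M X \<subseteq> {1..fst G}"
proof -
  show "finite (SX \<pi> F M X)" unfolding SX_def using finF by simp
  have "card (SX \<pi> F M X \<inter> UNIV) = card (F \<inter> UNIV) + card {s\<in>{1..M}. \<pi> (beta X s) s \<in> UNIV}"
    by (rule SX_inter[OF assms])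
  moreover have "{s\<in>{1..M}. \<pi> (beta X s) s \<in> UNIV} = {1..M}" by auto
  ultimately show "card (SX \<pi> F M X) = n" using nM by simp
  show "SX \<pi> F M X \<subseteq> {1..fst G}"
  proof
    fix y assume "y \<in> SX \<pi> F M X"
    then consider "y \<in> F" | s where "s \<in> {1..M}" "y = \<pi> (beta X s) s" unfolding SX_def by auto
    then show "y \<in> {1..fst G}"
    proof cases
      case 1 then show ?thesis using FN by auto
    next
      case 2
      then have "y \<in> {lo (beta X s)..hi (beta X s)}" using g_block[OF assms] by auto
      moreover have "beta X s \<le> k" using beta_le[OF assms] by auto
      ultimately show ?thesis using blk by fastforce
    qed
  qed
qed

lemma key:
  assumes X: "X \<in> XX" and X': "X' \<in> XX" and c: "c \<in> X" "c \<notin> X'"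
    and agree: "\<forall>x<c. x \<in> X \<longleftrightarrow> x \<in> X'"
  shows "EG G (SX \<pi> F M X) \<noteq> EG G (SX \<pi> F M X')"
proof
  assume eq: "EG G (SX \<pi> F M X) = EG G (SX \<pi> F M X')"
  define S where "S = SX \<pi> F M X"
  define S' where "S' = SX \<pi> F M X'"
  have finX: "finite X" "finite X'" using X X' finite_subset by blast+
  define i where "i = beta X c"
  have lt_eq: "{x\<in>X. x<s} = {x\<in>X'. x<s}" if "s \<le> c" for s using agree that by auto
  have bXX': "beta X s = beta X' s" if "s \<le> c" for s unfolding beta_def using lt_eq[OF that] by simp
  have bge: "Suc i \<le> beta X s" if "c < s" for s
  proof -
    have "insert c {x\<in>X. x<c} \<subseteq> {x\<in>X. x<s}" using c that by auto
    then have "card (insert c {x\<in>X. x<c}) \<le> beta X s" unfolding beta_def using finX by (intro card_mono) auto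
    moreover have "card (insert c {x\<in>X. x<c}) = Suc i" unfolding i_def beta_def using finX by simp
    ultimately show ?thesis by simp
  qed
  have bge': "i \<le> beta X' s" if "c < s" for s
  proof -
    have "{x\<in>X'. x<c} \<subseteq> {x\<in>X'. x<s}" using that by auto
    then have "card {x\<in>X'. x<c} \<le> beta X' s" unfolding beta_def using finX by (intro card_mono) auto
    then show ?thesis using bXX'[of c] unfolding i_def beta_def by simp
  qed
  have ik: "i < k"
  proof -
    have "{x\<in>X. x<c} \<subset> X" using c by auto
    then have "i < card X" unfolding i_def beta_def using finX by (intro psubset_card_mono) auto
    then show ?thesis using X by simp
  qed
  have "\<exists>x\<in>X'. c < x"
  proof (rule ccontr)
    assume "\<not> (\<exists>x\<in>X'. c < x)"
    then have "X' \<subseteq> {x\<in>X'. x<c}" using c by (auto simp: not_less le_less)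
    then have "card X' \<le> beta X' c" unfolding beta_def using finX by (intro card_mono) auto
    then show False using bXX'[of c] ik X' unfolding i_def by simp
  qed
  then have cM: "Suc c \<le> M" using X' by auto
  have c1M: "c \<in> {1..M}" using X c by auto
  define xx where "xx = \<pi> i c"
  have xxB: "xx \<in> {lo i..hi i} - F" using g_block[OF X c1M] unfolding xx_def i_def by simp
  have xxS: "xx \<in> S" unfolding S_def SX_def xx_def i_def using c1M by auto
  define y where "y = Suc (hi i)"
  have yF: "y \<in> F" unfolding Fdef y_def using ik by auto
  have zF: "w i \<in> F" unfolding Fdef using ik by auto
  have yS: "y \<in> S" "w i \<in> S" unfolding S_def SX_def using yF zF by auto
  have wi: "x0 i \<in> {lo i..hi i}" "w i \<noteq> x0 i" "w i \<noteq> y" "({x0 i, w i} \<in> snd G) \<noteq> ({y, w i} \<in> snd G)"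
    using wit ik unfolding y_def by auto
  have homi: "hom G (lo i) (hi i)" using blk ik by auto
  have zx: "w i \<noteq> xx" using xxB zF by auto
  have wit2: "({xx, w i} \<in> snd G) \<noteq> ({y, w i} \<in> snd G)"
    using hom_out[OF homi _ wi(1) zx wi(2)] xxB wi(4) by auto
  have xy: "xx < y" using xxB unfolding y_def by auto
  have fin: "finite S" "finite S'" unfolding S_def S'_def using SX_props[OF X] SX_props[OF X'] by auto
  have cd: "card S = card S'" unfolding S_def S'_def using SX_props[OF X] SX_props[OF X'] by auto
  have ik': "i \<le> k" using ik by simp
  have A: "card (S' \<inter> {..<lo i}) = card (S \<inter> {..<lo i})"
  proof -
    have "{s\<in>{1..M}. \<pi> (beta X' s) s \<in> {..<lo i}} = {s\<in>{1..M}. beta X' s < i}"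
      using g_lo[OF X' _ ik'] by auto
    also have "\<dots> = {s\<in>{1..M}. beta X s < i}"
    proof (intro Collect_cong conj_cong refl)
      fix s show "beta X' s < i \<longleftrightarrow> beta X s < i"
      proof (cases "s \<le> c")
        case True then show ?thesis using bXX' by simp
      next
        case False then show ?thesis using bge[of s] bge'[of s] by simp
      qed
    qed
    also have "\<dots> = {s\<in>{1..M}. \<pi> (beta X s) s \<in> {..<lo i}}"
      using g_lo[OF X _ ik'] by auto
    finally show ?thesis unfolding S_def S'_def using SX_inter[OF X] SX_inter[OF X'] by simp
  qed
  have B: "card (S \<inter> {..<lo i}) < pos S xx"
  proof -
    have "xx \<in> S \<inter> {..xx}" "xx \<notin> S \<inter> {..<lo i}" using xxB xxS by auto
    moreover have "S \<inter> {..<lo i} \<subseteq> S \<inter> {..xx}" using xxB by auto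
    ultimately have "S \<inter> {..<lo i} \<subset> S \<inter> {..xx}" by blast
    then show ?thesis unfolding pos_def using fin by (intro psubset_card_mono) auto
  qed
  have xyp: "pos S xx < pos S y" using pos_less[OF fin(1) xxS yS(1) xy] .
  have C: "pos S y = Suc (card (S \<inter> {..hi i}))"
  proof -
    have "S \<inter> {..y} = insert y (S \<inter> {..hi i})" using yS unfolding y_def by auto
    moreover have "y \<notin> S \<inter> {..hi i}" unfolding y_def by auto
    ultimately show ?thesis unfolding pos_def using fin by simp
  qed
  have D: "card (S \<inter> {..hi i}) < card (S' \<inter> {..hi i})"
  proof -
    have e1: "{s\<in>{1..M}. \<pi> (beta X s) s \<in> {..hi i}} = {s\<in>{1..M}. beta X s \<le> i}"
      using g_hi[OF X _ ik'] by auto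
    have e2: "{s\<in>{1..M}. \<pi> (beta X' s) s \<in> {..hi i}} = {s\<in>{1..M}. beta X' s \<le> i}"
      using g_hi[OF X' _ ik'] by auto
    have sub: "{s\<in>{1..M}. beta X s \<le> i} \<subseteq> {s\<in>{1..M}. beta X' s \<le> i}"
    proof
      fix s assume s: "s \<in> {s\<in>{1..M}. beta X s \<le> i}"
      then have "s \<le> c" using bge[of s] by (auto simp: not_le[symmetric])
      then show "s \<in> {s\<in>{1..M}. beta X' s \<le> i}" using s bXX' by auto
    qed
    have "beta X' (Suc c) = i"
    proof -
      have "{x\<in>X'. x < Suc c} = {x\<in>X'. x < c}" using c by (auto simp: less_Suc_eq)
      then show ?thesis using bXX'[of c] unfolding i_def beta_def by simp
    qed
    then have "Suc c \<in> {s\<in>{1..M}. beta X' s \<le> i}" "Suc c \<notin> {s\<in>{1..M}. beta X s \<le> i}"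
      using cM bge[of "Suc c"] by auto
    then have "{s\<in>{1..M}. beta X s \<le> i} \<subset> {s\<in>{1..M}. beta X' s \<le> i}" using sub by blast
    then have "card {s\<in>{1..M}. beta X s \<le> i} < card {s\<in>{1..M}. beta X' s \<le> i}"
      by (intro psubset_card_mono) auto
    then show ?thesis unfolding S_def S'_def using SX_inter[OF X] SX_inter[OF X'] e1 e2 by simp
  qed
  show False
    using dec[OF eq[folded S_def S'_def] fin cd homi xxS yS(1) yS(2) zx wi(3) wit2]
      A B xyp C D by linarith
qed

end




lemma general_bound:
  fixes lo hi :: "nat \<Rightarrow> nat"
  assumes her: "hereditary P" and GP: "G \<in> P" and og: "ordered_graph G" and k1: "1 \<le> k"
    and blocks: "\<forall>j\<le>k. 1 \<le> lo j \<and> lo j \<le> hi j \<and> hi j \<le> fst G \<and> hom G (lo j) (hi j) \<and> n + 2*k \<le> Suc (hi j) - lo j"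
    and ord: "\<forall>j<k. hi j < lo (Suc j) \<and> \<not> hom G (lo j) (Suc (hi j))"
  shows "(n - (3*k+2)) choose k \<le> card (slice P n)"
proof -
  have blk: "\<forall>j\<le>k. 1 \<le> lo j \<and> lo j \<le> hi j \<and> hi j \<le> fst G \<and> hom G (lo j) (hi j)" using blocks by auto
  have ordr: "\<forall>j<k. hi j < lo (Suc j)" using ord by auto
  have "\<forall>j. \<exists>a b. j < k \<longrightarrow> (a \<in> {lo j..hi j} \<and> b \<noteq> a \<and> b \<noteq> Suc (hi j) \<and>
                 ({a, b} \<in> snd G) \<noteq> ({Suc (hi j), b} \<in> snd G))"
  proof
    fix j
    show "\<exists>a b. j < k \<longrightarrow> (a \<in> {lo j..hi j} \<and> b \<noteq> a \<and> b \<noteq> Suc (hi j) \<and>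
                 ({a, b} \<in> snd G) \<noteq> ({Suc (hi j), b} \<in> snd G))"
    proof (cases "j < k")
      case True
      then have "hom G (lo j) (hi j)" "\<not> hom G (lo j) (Suc (hi j))" using blocks ord by auto
      then show ?thesis using nonhom_witness by metis
    qed simp
  qed
  then obtain x0 w where wit: "\<forall>j<k. x0 j \<in> {lo j..hi j} \<and> w j \<noteq> x0 j \<and> w j \<noteq> Suc (hi j) \<and>
                 ({x0 j, w j} \<in> snd G) \<noteq> ({Suc (hi j), w j} \<in> snd G)"
    by metis
  define F where "F = (\<lambda>j. Suc (hi j)) ` {..<k} \<union> w ` {..<k}"
  have finF: "finite F" unfolding F_def by simp
  have cF: "card F \<le> 2*k"
  proof -
    have "card F \<le> card ((\<lambda>j. Suc (hi j)) ` {..<k}) + card (w ` {..<k})" unfolding F_def by (rule card_Un_le)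
    also have "\<dots> \<le> k + k" using card_image_le[of "{..<k}"] by (intro add_mono) auto
    finally show ?thesis by simp
  qed
  have FN: "F \<subseteq> {1..fst G}"
  proof
    fix y assume "y \<in> F"
    then consider j where "j < k" "y = Suc (hi j)" | j where "j < k" "y = w j" unfolding F_def by auto
    then show "y \<in> {1..fst G}"
    proof cases
      case 1
      then have "Suc (hi j) \<le> lo (Suc j)" "lo (Suc j) \<le> hi (Suc j)" "hi (Suc j) \<le> fst G"
        using ordr blk by auto
      then show ?thesis using 1 by auto
    next
      case 2
      have "{x0 j, w j} \<in> snd G \<or> {Suc (hi j), w j} \<in> snd G" using wit 2 by auto
      then show ?thesis using ordered_graph_edge(3)[OF og] 2 by blast
    qed
  qed
  show ?thesis
  proof (cases "n < card F")
    case True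
    then have "n - (3*k+2) = 0" using cF by simp
    then show ?thesis using k1 by (simp add: binomial_eq_0)
  next
    case False
    define M where "M = n - card F"
    have nM: "n = card F + M" using False M_def by simp
    have "\<forall>j. \<exists>f. j \<le> k \<longrightarrow> inj_on f {1..M} \<and> f ` {1..M} \<subseteq> {lo j..hi j} - F"
    proof
      fix j
      show "\<exists>f. j \<le> k \<longrightarrow> inj_on f {1..M} \<and> f ` {1..M} \<subseteq> {lo j..hi j} - F"
      proof (cases "j \<le> k")
        case True
        have "card {lo j..hi j} - card F \<le> card ({lo j..hi j} - F)"
          using finF by (rule diff_card_le_card_Diff)
        moreover have "n + 2*k \<le> card {lo j..hi j}" using blocks True by simp
        ultimately have "card {1..M} \<le> card ({lo j..hi j} - F)" using cF M_def by simp
        then obtain f where "f ` {1..M} \<subseteq> {lo j..hi j} - F" "inj_on f {1..M}"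
          using card_le_inj[of "{1..M}" "{lo j..hi j} - F"] by auto
        then show ?thesis by blast
      qed simp
    qed
    then obtain \<pi> where pool: "\<forall>j\<le>k. inj_on (\<pi> j) {1..M} \<and> \<pi> j ` {1..M} \<subseteq> {lo j..hi j} - F"
      by metis
    note ctx = her GP og blk ordr wit F_def FN pool nM
    let ?XX = "{X. X \<subseteq> {1..M} \<and> card X = k}"
    let ?f = "\<lambda>X. EG G (SX \<pi> F M X)"
    have inj: "inj_on ?f ?XX"
    proof (rule inj_onI, rule ccontr)
      fix X X' assume X: "X \<in> ?XX" and X': "X' \<in> ?XX" and eq: "?f X = ?f X'" and ne: "X \<noteq> X'"
      define D where "D = (X - X') \<union> (X' - X)"
      have finD: "finite D" "D \<noteq> {}" unfolding D_def using X X' ne finite_subset by auto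
      define c where "c = Min D"
      have cD: "c \<in> D" unfolding c_def using finD by simp
      have agree: "\<forall>x<c. x \<in> X \<longleftrightarrow> x \<in> X'"
      proof (intro allI impI)
        fix x assume "x < c"
        then have "x \<notin> D" unfolding c_def using finD Min_le by (metis not_le)
        then show "x \<in> X \<longleftrightarrow> x \<in> X'" unfolding D_def by auto
      qed
      show False
      proof (cases "c \<in> X")
        case True
        then have "c \<notin> X'" using cD unfolding D_def by auto
        then show False using key[OF ctx X X' True _ agree] eq by simp
      next
        case False
        then have "c \<in> X'" using cD unfolding D_def by auto
        then show False using key[OF ctx X' X _ False] agree eq by simp
      qed
    qed
    have img: "?f ` ?XX \<subseteq> slice P n"
    proof
      fix E assume "E \<in> ?f ` ?XX"
      then obtain X where X: "X \<in> ?XX" "E = ?f X" by blast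
      have "(card (SX \<pi> F M X), EG G (SX \<pi> F M X)) \<in> P"
        using EG_in_P[OF her GP] SX_props[OF ctx X(1)] by blast
      then show "E \<in> slice P n" using SX_props[OF ctx X(1)] X unfolding slice_def by simp
    qed
    have "card ?XX = M choose k" using n_subsets[of "{1..M}" k] by simp
    then have "M choose k = card (?f ` ?XX)" using card_image[OF inj] by simp
    also have "\<dots> \<le> card (slice P n)" using img slice_finite[OF her] by (rule card_mono[rotated])
    finally have "M choose k \<le> card (slice P n)" .
    moreover have "n - (3*k+2) \<le> M" using cF M_def by simp
    ultimately show ?thesis using binomial_right_mono le_trans by blast
  qed
qed




definition fam :: "nat set \<Rightarrow> nat set \<Rightarrow> nat set \<Rightarrow> nat \<Rightarrow> nat \<Rightarrow> nat \<Rightarrow> nat \<Rightarrow> nat set" where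
  "fam L Mid U h1 l2 a c = L \<union> {Suc h1 - a..h1} \<union> Mid \<union> {l2..<l2+c} \<union> U"

lemma card_inter_split:
  assumes "finite A" "finite B" "A \<inter> B = {}"
  shows "card ((A \<union> B) \<inter> T) = card (A \<inter> T) + card (B \<inter> T)"
proof -
  have "(A \<union> B) \<inter> T = (A \<inter> T) \<union> (B \<inter> T)" by auto
  then show ?thesis using assms by (simp add: card_Un_disjoint disjoint_iff)
qed

lemma fam_card_gen:
  assumes fin: "finite L" "finite Mid" "finite U"
    and L: "\<forall>x\<in>L. x < Suc h1 - a" and Mi: "\<forall>x\<in>Mid. h1 < x \<and> x < l2" and U: "\<forall>x\<in>U. l2 + c \<le> x"
    and hl: "h1 < l2"
  shows "card (fam L Mid U h1 l2 a c \<inter> T) = card (L \<inter> T) + card ({Suc h1 - a..h1} \<inter> T) +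
           card (Mid \<inter> T) + card ({l2..<l2+c} \<inter> T) + card (U \<inter> T)"
proof -
  let ?A = "{Suc h1 - a..h1}" and ?C = "{l2..<l2+c}"
  have d1: "L \<inter> ?A = {}" using L by auto
  have d2: "(L \<union> ?A) \<inter> Mid = {}" using L Mi by fastforce
  have d3: "(L \<union> ?A \<union> Mid) \<inter> ?C = {}" using L Mi hl by fastforce
  have d4: "(L \<union> ?A \<union> Mid \<union> ?C) \<inter> U = {}" using L Mi U hl by fastforce
  have "card (fam L Mid U h1 l2 a c \<inter> T) = card ((L \<union> ?A \<union> Mid \<union> ?C) \<inter> T) + card (U \<inter> T)"
    unfolding fam_def using fin d4 by (intro card_inter_split) auto
  also have "card ((L \<union> ?A \<union> Mid \<union> ?C) \<inter> T) = card ((L \<union> ?A \<union> Mid) \<inter> T) + card (?C \<inter> T)"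
    using fin d3 by (intro card_inter_split) auto
  also have "card ((L \<union> ?A \<union> Mid) \<inter> T) = card ((L \<union> ?A) \<inter> T) + card (Mid \<inter> T)"
    using fin d2 by (intro card_inter_split) auto
  also have "card ((L \<union> ?A) \<inter> T) = card (L \<inter> T) + card (?A \<inter> T)"
    using fin d1 by (intro card_inter_split) auto
  finally show ?thesis by simp
qed

lemma fam_facts:
  assumes fin: "finite L" "finite Mid" "finite U"
    and L: "\<forall>x\<in>L. x < Suc h1 - a" and Mi: "\<forall>x\<in>Mid. h1 < x \<and> x < l2" and U: "\<forall>x\<in>U. l2 + c \<le> x"
    and hl: "h1 < l2" and ah: "a \<le> h1"
  shows "card (fam L Mid U h1 l2 a c) = card L + a + card Mid + c + card U"
    and "y \<in> L \<Longrightarrow> pos (fam L Mid U h1 l2 a c) y = card (L \<inter> {..y})"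
    and "y \<in> {Suc h1 - a..h1} \<Longrightarrow> pos (fam L Mid U h1 l2 a c) y = card L + (y + a - h1)"
    and "y \<in> Mid \<Longrightarrow> pos (fam L Mid U h1 l2 a c) y = card L + a + card (Mid \<inter> {..y})"
    and "y \<in> {l2..<l2+c} \<Longrightarrow> pos (fam L Mid U h1 l2 a c) y = card L + a + card Mid + (Suc y - l2)"
    and "y \<in> U \<Longrightarrow> pos (fam L Mid U h1 l2 a c) y = card L + a + card Mid + c + card (U \<inter> {..y})"
    and "finite (fam L Mid U h1 l2 a c)"
proof -
  note gen = fam_card_gen[OF fin L Mi U hl]
  show "card (fam L Mid U h1 l2 a c) = card L + a + card Mid + c + card U"
    using gen[of UNIV] ah by simp
  show "finite (fam L Mid U h1 l2 a c)" unfolding fam_def using fin by simp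
  assume y: "y \<in> L"
  have "{Suc h1 - a..h1} \<inter> {..y} = {}" "Mid \<inter> {..y} = {}" "{l2..<l2+c} \<inter> {..y} = {}" "U \<inter> {..y} = {}"
    using y L Mi U hl by fastforce+
  then show "pos (fam L Mid U h1 l2 a c) y = card (L \<inter> {..y})" unfolding pos_def using gen[of "{..y}"] by simp
next
  note gen = fam_card_gen[OF fin L Mi U hl]
  assume y: "y \<in> {Suc h1 - a..h1}"
  have "L \<inter> {..y} = L" "Mid \<inter> {..y} = {}" "{l2..<l2+c} \<inter> {..y} = {}" "U \<inter> {..y} = {}"
    using y L Mi U hl by fastforce+
  moreover have "{Suc h1 - a..h1} \<inter> {..y} = {Suc h1 - a..y}" using y by auto
  moreover have "card {Suc h1 - a..y} = y + a - h1" using y ah by simp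
  moreover have "min h1 y = y" using y by simp
  ultimately show "pos (fam L Mid U h1 l2 a c) y = card L + (y + a - h1)" unfolding pos_def using gen[of "{..y}"] by simp
next
  note gen = fam_card_gen[OF fin L Mi U hl]
  assume y: "y \<in> Mid"
  have "L \<inter> {..y} = L" "{Suc h1 - a..h1} \<inter> {..y} = {Suc h1 - a..h1}" "{l2..<l2+c} \<inter> {..y} = {}" "U \<inter> {..y} = {}"
    using y L Mi U hl by fastforce+
  moreover have "min h1 y = h1" using y Mi by fastforce
  ultimately show "pos (fam L Mid U h1 l2 a c) y = card L + a + card (Mid \<inter> {..y})"
    unfolding pos_def using gen[of "{..y}"] ah by simp
next
  note gen = fam_card_gen[OF fin L Mi U hl]
  assume y: "y \<in> {l2..<l2+c}"
  have "L \<inter> {..y} = L" "{Suc h1 - a..h1} \<inter> {..y} = {Suc h1 - a..h1}" "Mid \<inter> {..y} = Mid" "U \<inter> {..y} = {}"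
    using y L Mi U hl by fastforce+
  moreover have "{l2..<l2+c} \<inter> {..y} = {l2..y}" using y by auto
  moreover have "min h1 y = h1" "min (l2 + c - 1) y = y" using y hl by auto
  ultimately show "pos (fam L Mid U h1 l2 a c) y = card L + a + card Mid + (Suc y - l2)"
    unfolding pos_def using gen[of "{..y}"] ah by simp
next
  note gen = fam_card_gen[OF fin L Mi U hl]
  assume y: "y \<in> U"
  have "L \<inter> {..y} = L" "{Suc h1 - a..h1} \<inter> {..y} = {Suc h1 - a..h1}" "Mid \<inter> {..y} = Mid" "{l2..<l2+c} \<inter> {..y} = {l2..<l2+c}"
    using y L Mi U hl by fastforce+
  moreover have "min h1 y = h1" using y U hl by fastforce
  ultimately show "pos (fam L Mid U h1 l2 a c) y = card L + a + card Mid + c + card (U \<inter> {..y})"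
    unfolding pos_def using gen[of "{..y}"] ah by simp
qed

lemma EG_diff:
  assumes "finite S" "finite S'" "x \<in> S" "y \<in> S" "x' \<in> S'" "y' \<in> S'"
    "pos S x = pos S' x'" "pos S y = pos S' y'" "({x,y} \<in> snd G) \<noteq> ({x',y'} \<in> snd G)"
  shows "EG G S \<noteq> EG G S'"
  using EG_transfer[of G S S' x y x' y'] assms by blast




lemma pairs_same:
  assumes h: "hom G lo hi" and m: "a \<in> {lo..hi}" "b \<in> {lo..hi}" "a' \<in> {lo..hi}" "b' \<in> {lo..hi}"
    and ne: "a \<noteq> b" "a' \<noteq> b'"
  shows "{a,b} \<in> snd G \<longleftrightarrow> {a',b'} \<in> snd G"
proof (cases "b' = a")
  case False
  have "{a,b} \<in> snd G \<longleftrightarrow> {a,b'} \<in> snd G"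
  proof (cases "b = b'")
    case False
    then show ?thesis using hom_in[OF h m(2) m(4) m(1)] ne False \<open>b' \<noteq> a\<close> by metis
  qed simp
  also have "\<dots> \<longleftrightarrow> {a',b'} \<in> snd G"
    using hom_out[OF h m(1) m(3), of b'] False ne by metis
  finally show ?thesis .
next
  case True
  then have "a' \<noteq> a" using ne by simp
  then have "{a,b} \<in> snd G \<longleftrightarrow> {a,a'} \<in> snd G"
  proof (cases "b = a'")
    case False
    then show ?thesis using hom_in[OF h m(2) m(3) m(1)] ne \<open>a' \<noteq> a\<close> by metis
  qed simp
  then show ?thesis using True by (simp add: insert_commute)
qed

lemma inj_lt:
  fixes f :: "nat \<Rightarrow> 'b"
  assumes "\<And>a a'. a \<in> I \<Longrightarrow> a' \<in> I \<Longrightarrow> a < a' \<Longrightarrow> f a \<noteq> f a'"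
  shows "inj_on f I"
proof (rule inj_onI, rule ccontr)
  fix a a' assume "a \<in> I" "a' \<in> I" "f a = f a'" "a \<noteq> a'"
  then show False using assms by (metis linorder_neqE_nat)
qed

lemma cnt1:
  assumes "hereditary P" "finite I" "card I = n" "inj_on f I" "f ` I \<subseteq> slice P n"
  shows "n \<le> card (slice P n)"
  using card_mono[OF slice_finite[OF assms(1)] assms(5)] card_image[OF assms(4)] assms(3) by simp

lemma cnt2:
  assumes "hereditary P" "finite I" "card I = n - 1" "inj_on f I" "f ` I \<subseteq> slice P n"
    "K \<in> slice P n" "K \<notin> f ` I"
  shows "n \<le> card (slice P n)"
proof -
  have "card (insert K (f ` I)) = Suc (n - 1)" using card_image[OF assms(4)] assms(2,3,7) by simp
  moreover have "insert K (f ` I) \<subseteq> slice P n" using assms(5,6) by simp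
  ultimately have "Suc (n - 1) \<le> card (slice P n)" using card_mono[OF slice_finite[OF assms(1)]] by metis
  then show ?thesis by simp
qed

context
  fixes P :: "ograph set" and G :: ograph and n l1 h1 l2 h2 :: nat
  assumes her: "hereditary P" and GP: "G \<in> P" and og: "ordered_graph G"
    and b1: "1 \<le> l1" "hom G l1 h1" "n + 3 \<le> Suc h1 - l1"
    and b2: "h1 < l2" "h2 \<le> fst G" "hom G l2 h2" "n + 3 \<le> Suc h2 - l2"
begin

lemma h1_big: "n + 2 \<le> h1" "l1 + n + 2 \<le> h1" using b1 by auto

lemma h2_big: "l2 + n + 2 \<le> h2" using b2 by auto

abbreviation "SS L Mid U a c \<equiv> fam L Mid U h1 l2 a c"

definition good :: "nat set \<Rightarrow> nat set \<Rightarrow> nat set \<Rightarrow> bool" where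
  "good L Mid U \<longleftrightarrow> L \<subseteq> {1..<l1} \<and> Mid \<subseteq> {h1<..<l2} \<and> U \<subseteq> {h2<..fst G}"

lemma good_facts:
  assumes g: "good L Mid U" and a: "a \<le> n" and c: "c \<le> n"
  shows "card (SS L Mid U a c) = card L + a + card Mid + c + card U"
    and "y \<in> L \<Longrightarrow> pos (SS L Mid U a c) y = card (L \<inter> {..y})"
    and "y \<in> {Suc h1 - a..h1} \<Longrightarrow> pos (SS L Mid U a c) y = card L + (y + a - h1)"
    and "y \<in> Mid \<Longrightarrow> pos (SS L Mid U a c) y = card L + a + card (Mid \<inter> {..y})"
    and "y \<in> {l2..<l2+c} \<Longrightarrow> pos (SS L Mid U a c) y = card L + a + card Mid + (Suc y - l2)"
    and "y \<in> U \<Longrightarrow> pos (SS L Mid U a c) y = card L + a + card Mid + c + card (U \<inter> {..y})"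
    and "finite (SS L Mid U a c)"
proof -
  have fin: "finite L" "finite Mid" "finite U" using g unfolding good_def
    by (auto intro: finite_subset)
  have L: "\<forall>x\<in>L. x < Suc h1 - a" using g a b1 unfolding good_def by fastforce
  have Mi: "\<forall>x\<in>Mid. h1 < x \<and> x < l2" using g unfolding good_def by auto
  have U: "\<forall>x\<in>U. l2 + c \<le> x" using g c b2 unfolding good_def by fastforce
  have ah: "a \<le> h1" using a b1 by simp
  note ff = fam_facts[OF fin L Mi U b2(1) ah]
  show "card (SS L Mid U a c) = card L + a + card Mid + c + card U" by (rule ff(1))
  show "y \<in> L \<Longrightarrow> pos (SS L Mid U a c) y = card (L \<inter> {..y})" by (rule ff(2))
  show "y \<in> {Suc h1 - a..h1} \<Longrightarrow> pos (SS L Mid U a c) y = card L + (y + a - h1)" by (rule ff(3))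
  show "y \<in> Mid \<Longrightarrow> pos (SS L Mid U a c) y = card L + a + card (Mid \<inter> {..y})" by (rule ff(4))
  show "y \<in> {l2..<l2+c} \<Longrightarrow> pos (SS L Mid U a c) y = card L + a + card Mid + (Suc y - l2)" by (rule ff(5))
  show "y \<in> U \<Longrightarrow> pos (SS L Mid U a c) y = card L + a + card Mid + c + card (U \<inter> {..y})" by (rule ff(6))
  show "finite (SS L Mid U a c)" by (rule ff(7))
qed

lemma good_sub:
  assumes g: "good L Mid U" and a: "a \<le> n" and c: "c \<le> n"
  shows "SS L Mid U a c \<subseteq> {1..fst G}" "{Suc h1 - a..h1} \<subseteq> {l1..h1}" "{l2..<l2+c} \<subseteq> {l2..h2}"
proof -
  show A: "{Suc h1 - a..h1} \<subseteq> {l1..h1}" using a b1 by auto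
  show C: "{l2..<l2+c} \<subseteq> {l2..h2}" using c b2 by auto
  show "SS L Mid U a c \<subseteq> {1..fst G}" using A C g b1 b2 unfolding good_def fam_def by fastforce
qed

lemma good_slice:
  assumes g: "good L Mid U" and a: "a \<le> n" and c: "c \<le> n" and cd: "card L + a + card Mid + c + card U = n"
  shows "EG G (SS L Mid U a c) \<in> slice P n"
  using EG_in_P[OF her GP good_sub(1)[OF g a c]] good_facts(1)[OF g a c] cd unfolding slice_def by simp

lemma in1: "x \<in> {l1..h1} \<Longrightarrow> y \<in> {l1..h1} \<Longrightarrow> x \<noteq> y \<Longrightarrow> {x,y} \<in> snd G \<longleftrightarrow> {l1,h1} \<in> snd G"
  using pairs_same[OF b1(2), of x y l1 h1] b1 by auto

lemma in2: "x \<in> {l2..h2} \<Longrightarrow> y \<in> {l2..h2} \<Longrightarrow> x \<noteq> y \<Longrightarrow> {x,y} \<in> snd G \<longleftrightarrow> {l2,h2} \<in> snd G"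
  using pairs_same[OF b2(3), of x y l2 h2] b2 by auto

lemma out1: "x \<in> {l1..h1} \<Longrightarrow> z \<notin> {l1..h1} \<Longrightarrow> {z,x} \<in> snd G \<longleftrightarrow> {z,h1} \<in> snd G"
  using hom_out[OF b1(2), of x h1 z] b1 by (auto simp: insert_commute)

lemma out2: "x \<in> {l2..h2} \<Longrightarrow> z \<notin> {l2..h2} \<Longrightarrow> {z,x} \<in> snd G \<longleftrightarrow> {z,l2} \<in> snd G"
  using hom_out[OF b2(3), of x l2 z] b2 by (auto simp: insert_commute)

lemma cross: "x \<in> {l1..h1} \<Longrightarrow> y \<in> {l2..h2} \<Longrightarrow> {x,y} \<in> snd G \<longleftrightarrow> {h1,l2} \<in> snd G"
proof -
  assume x: "x \<in> {l1..h1}" and y: "y \<in> {l2..h2}"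
  have "y \<notin> {l1..h1}" "h1 \<notin> {l2..h2}" using y b2 by auto
  then have "{y,x} \<in> snd G \<longleftrightarrow> {y,h1} \<in> snd G" "{h1,y} \<in> snd G \<longleftrightarrow> {h1,l2} \<in> snd G"
    using out1[OF x] out2[OF y] by auto
  then show ?thesis by (simp add: insert_commute)
qed

lemma case_i:
  assumes ne: "({l1,h1} \<in> snd G) \<noteq> ({h1,l2} \<in> snd G)"
  shows "n \<le> card (slice P n)"
proof -
  have g: "good {} {} {}" unfolding good_def by simp
  let ?f = "\<lambda>a. EG G (SS {} {} {} a (n - a))"
  have inj: "inj_on ?f {1..n}"
  proof (rule inj_lt)
    fix a a' assume a: "a \<in> {1..n}" "a' \<in> {1..n}" "a < a'"
    have an: "a \<le> n" "a' \<le> n" "n - a \<le> n" "n - a' \<le> n" using a by auto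
    note F = good_facts[OF g an(1) an(3)] and F' = good_facts[OF g an(2) an(4)]
    let ?x = "Suc h1 - a" and ?y = l2 and ?x' = "Suc h1 - a'" and ?y' = "Suc h1 - a' + a"
    have m: "?x \<in> {Suc h1 - a..h1}" "?y \<in> {l2..<l2 + (n - a)}" "?x' \<in> {Suc h1 - a'..h1}" "?y' \<in> {Suc h1 - a'..h1}"
      using a b1 by auto
    have p: "pos (SS {} {} {} a (n - a)) ?x = 1" "pos (SS {} {} {} a (n - a)) ?y = Suc a"
      "pos (SS {} {} {} a' (n - a')) ?x' = 1" "pos (SS {} {} {} a' (n - a')) ?y' = Suc a"
    proof -
      have "a \<le> h1" "a' \<le> h1" using a h1_big by auto
      then show "pos (SS {} {} {} a (n - a)) ?x = 1" "pos (SS {} {} {} a (n - a)) ?y = Suc a"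
        "pos (SS {} {} {} a' (n - a')) ?x' = 1" "pos (SS {} {} {} a' (n - a')) ?y' = Suc a"
        using F(3)[OF m(1)] F(5)[OF m(2)] F'(3)[OF m(3)] F'(3)[OF m(4)] a by auto
    qed
    have B: "{Suc h1 - a..h1} \<subseteq> {l1..h1}" "{Suc h1 - a'..h1} \<subseteq> {l1..h1}" "{l2..<l2 + (n - a)} \<subseteq> {l2..h2}"
      using good_sub[OF g, of a "n - a"] good_sub[OF g, of a' "n - a'"] a by auto
    have "{?x,?y} \<in> snd G \<longleftrightarrow> {h1,l2} \<in> snd G"
      by (rule cross[OF subsetD[OF B(1) m(1)] subsetD[OF B(3) m(2)]])
    moreover have "{?x',?y'} \<in> snd G \<longleftrightarrow> {l1,h1} \<in> snd G"
      by (rule in1[OF subsetD[OF B(2) m(3)] subsetD[OF B(2) m(4)]]) (use a in simp)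
    ultimately have d: "({?x,?y} \<in> snd G) \<noteq> ({?x',?y'} \<in> snd G)" using ne by simp
    have mem: "?x \<in> SS {} {} {} a (n - a)" "?y \<in> SS {} {} {} a (n - a)"
      "?x' \<in> SS {} {} {} a' (n - a')" "?y' \<in> SS {} {} {} a' (n - a')"
      using m unfolding fam_def by blast+
    show "?f a \<noteq> ?f a'"
      by (rule EG_diff[OF F(7) F'(7) mem(1) mem(2) mem(3) mem(4)]) (use p d in simp_all)
  qed
  have "?f ` {1..n} \<subseteq> slice P n" using good_slice[OF g] by auto
  then show ?thesis using cnt1[OF her _ _ inj] by simp
qed

lemma memA: "y \<in> {Suc h1 - a..h1} \<Longrightarrow> y \<in> SS L Mid U a c" unfolding fam_def by blast
lemma memC: "y \<in> {l2..<l2+c} \<Longrightarrow> y \<in> SS L Mid U a c" unfolding fam_def by blast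
lemma memL: "y \<in> L \<Longrightarrow> y \<in> SS L Mid U a c" unfolding fam_def by blast
lemma memM: "y \<in> Mid \<Longrightarrow> y \<in> SS L Mid U a c" unfolding fam_def by blast
lemma memU: "y \<in> U \<Longrightarrow> y \<in> SS L Mid U a c" unfolding fam_def by blast
lemma inA: "y \<in> {Suc h1 - a..h1} \<Longrightarrow> a \<le> n \<Longrightarrow> y \<in> {l1..h1}" using h1_big by auto
lemma inC: "y \<in> {l2..<l2+c} \<Longrightarrow> c \<le> n \<Longrightarrow> y \<in> {l2..h2}" using h2_big by auto

lemma case_ii:
  assumes ne: "({l2,h2} \<in> snd G) \<noteq> ({h1,l2} \<in> snd G)"
  shows "n \<le> card (slice P n)"
proof -
  have g: "good {} {} {}" unfolding good_def by simp
  let ?f = "\<lambda>a. EG G (SS {} {} {} a (n - a))"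
  have inj: "inj_on ?f {0..<n}"
  proof (rule inj_lt)
    fix a a' assume a: "a \<in> {0..<n}" "a' \<in> {0..<n}" "a < a'"
    have an: "a \<le> n" "a' \<le> n" "n - a \<le> n" "n - a' \<le> n" using a by auto
    note F = good_facts[OF g an(1) an(3)] and F' = good_facts[OF g an(2) an(4)]
    let ?y1 = "l2 + (a' - Suc a)" and ?y2 = "l2 + (n - Suc a)" and ?x1 = h1 and ?x2 = "l2 + (n - Suc a')"
    have m: "?y1 \<in> {l2..<l2 + (n - a)}" "?y2 \<in> {l2..<l2 + (n - a)}" "?x1 \<in> {Suc h1 - a'..h1}" "?x2 \<in> {l2..<l2 + (n - a')}"
      using a by auto
    have p: "pos (SS {} {} {} a (n - a)) ?y1 = a'" "pos (SS {} {} {} a (n - a)) ?y2 = n"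
      "pos (SS {} {} {} a' (n - a')) ?x1 = a'" "pos (SS {} {} {} a' (n - a')) ?x2 = n"
      using F(5)[OF m(1)] F(5)[OF m(2)] F'(3)[OF m(3)] F'(5)[OF m(4)] a by auto
    have "{?y1,?y2} \<in> snd G \<longleftrightarrow> {l2,h2} \<in> snd G"
      by (rule in2[OF inC[OF m(1) an(3)] inC[OF m(2) an(3)]]) (use a in simp)
    moreover have "{?x1,?x2} \<in> snd G \<longleftrightarrow> {h1,l2} \<in> snd G"
      by (rule cross[OF inA[OF m(3) an(2)] inC[OF m(4) an(4)]])
    ultimately have d: "({?y1,?y2} \<in> snd G) \<noteq> ({?x1,?x2} \<in> snd G)" using ne by simp
    show "?f a \<noteq> ?f a'"
      by (rule EG_diff[OF F(7) F'(7) memC[OF m(1)] memC[OF m(2)] memA[OF m(3)] memC[OF m(4)]]) (use p d in simp_all)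
  qed
  have "?f ` {0..<n} \<subseteq> slice P n" using good_slice[OF g] by auto
  then show ?thesis using cnt1[OF her _ _ inj] by simp
qed

lemma case_iii:
  assumes z: "z \<in> {1..fst G}" "z \<notin> {l1..h1}" "z \<notin> {l2..h2}" and ne: "({z,h1} \<in> snd G) \<noteq> ({z,l2} \<in> snd G)"
  shows "n \<le> card (slice P n)"
proof -
  consider "z < l1" | "h1 < z" "z < l2" | "h2 < z" using z by fastforce
  then show ?thesis
  proof cases
    case 1
    have g: "good {z} {} {}" unfolding good_def using z 1 by auto
    let ?f = "\<lambda>a. EG G (SS {z} {} {} a (n - Suc a))"
    have inj: "inj_on ?f {0..<n}"
    proof (rule inj_lt)
      fix a a' assume a: "a \<in> {0..<n}" "a' \<in> {0..<n}" "a < a'"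
      have an: "a \<le> n" "a' \<le> n" "n - Suc a \<le> n" "n - Suc a' \<le> n" using a by auto
      note F = good_facts[OF g an(1) an(3)] and F' = good_facts[OF g an(2) an(4)]
      let ?x' = "Suc h1 - a' + a"
      have m: "l2 \<in> {l2..<l2 + (n - Suc a)}" "?x' \<in> {Suc h1 - a'..h1}" "z \<in> {z}"
        using a h1_big by auto
      have p: "pos (SS {z} {} {} a (n - Suc a)) z = 1" "pos (SS {z} {} {} a (n - Suc a)) l2 = Suc (Suc a)"
        "pos (SS {z} {} {} a' (n - Suc a')) z = 1" "pos (SS {z} {} {} a' (n - Suc a')) ?x' = Suc (Suc a)"
        using F(2)[OF m(3)] F(5)[OF m(1)] F'(2)[OF m(3)] F'(3)[OF m(2)] a h1_big by auto
      have "{z,l2} \<in> snd G \<longleftrightarrow> {z,?x'} \<in> snd G \<longleftrightarrow> False"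
        using out1[OF inA[OF m(2) an(2)] z(2)] ne by simp
      then have d: "({z,l2} \<in> snd G) \<noteq> ({z,?x'} \<in> snd G)" by blast
      show "?f a \<noteq> ?f a'"
        by (rule EG_diff[OF F(7) F'(7) memL[OF m(3)] memC[OF m(1)] memL[OF m(3)] memA[OF m(2)]]) (use p d in simp_all)
    qed
    have "?f a \<in> slice P n" if "a \<in> {0..<n}" for a using good_slice[OF g, of a "n - Suc a"] that by auto
    then have "?f ` {0..<n} \<subseteq> slice P n" by auto
    then show ?thesis using cnt1[OF her _ _ inj] by simp
  next
    case 2
    have g: "good {} {z} {}" unfolding good_def using z 2 by auto
    let ?f = "\<lambda>a. EG G (SS {} {z} {} a (n - Suc a))"
    have inj: "inj_on ?f {0..<n}"
    proof (rule inj_lt)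
      fix a a' assume a: "a \<in> {0..<n}" "a' \<in> {0..<n}" "a < a'"
      have an: "a \<le> n" "a' \<le> n" "n - Suc a \<le> n" "n - Suc a' \<le> n" using a by auto
      note F = good_facts[OF g an(1) an(3)] and F' = good_facts[OF g an(2) an(4)]
      let ?x' = "Suc h1 - a' + a" and ?y = "l2 + (a' - Suc a)"
      have m: "?y \<in> {l2..<l2 + (n - Suc a)}" "?x' \<in> {Suc h1 - a'..h1}" "z \<in> {z}"
        using a h1_big by auto
      have p: "pos (SS {} {z} {} a (n - Suc a)) z = Suc a" "pos (SS {} {z} {} a (n - Suc a)) ?y = Suc a'"
        "pos (SS {} {z} {} a' (n - Suc a')) ?x' = Suc a" "pos (SS {} {z} {} a' (n - Suc a')) z = Suc a'"
        using F(4)[OF m(3)] F(5)[OF m(1)] F'(3)[OF m(2)] F'(4)[OF m(3)] a h1_big by auto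
      have e1: "{z,?y} \<in> snd G \<longleftrightarrow> {z,l2} \<in> snd G" using out2[OF inC[OF m(1) an(3)] z(3)] .
      have e2: "{z,?x'} \<in> snd G \<longleftrightarrow> {z,h1} \<in> snd G" using out1[OF inA[OF m(2) an(2)] z(2)] .
      have d: "({z,?y} \<in> snd G) \<noteq> ({?x',z} \<in> snd G)" using e1 e2 ne by (simp add: insert_commute)
      show "?f a \<noteq> ?f a'"
        by (rule EG_diff[OF F(7) F'(7) memM[OF m(3)] memC[OF m(1)] memA[OF m(2)] memM[OF m(3)]]) (use p d in simp_all)
    qed
    have "?f a \<in> slice P n" if "a \<in> {0..<n}" for a using good_slice[OF g, of a "n - Suc a"] that by auto
    then have "?f ` {0..<n} \<subseteq> slice P n" by auto
    then show ?thesis using cnt1[OF her _ _ inj] by simp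
  next
    case 3
    have g: "good {} {} {z}" unfolding good_def using z 3 by auto
    let ?f = "\<lambda>a. EG G (SS {} {} {z} a (n - Suc a))"
    have inj: "inj_on ?f {0..<n}"
    proof (rule inj_lt)
      fix a a' assume a: "a \<in> {0..<n}" "a' \<in> {0..<n}" "a < a'"
      have an: "a \<le> n" "a' \<le> n" "n - Suc a \<le> n" "n - Suc a' \<le> n" using a by auto
      note F = good_facts[OF g an(1) an(3)] and F' = good_facts[OF g an(2) an(4)]
      let ?x' = "Suc h1 - a' + a"
      have m: "l2 \<in> {l2..<l2 + (n - Suc a)}" "?x' \<in> {Suc h1 - a'..h1}" "z \<in> {z}"
        using a h1_big by auto
      have p: "pos (SS {} {} {z} a (n - Suc a)) l2 = Suc a" "pos (SS {} {} {z} a (n - Suc a)) z = n"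
        "pos (SS {} {} {z} a' (n - Suc a')) ?x' = Suc a" "pos (SS {} {} {z} a' (n - Suc a')) z = n"
        using F(5)[OF m(1)] F(6)[OF m(3)] F'(3)[OF m(2)] F'(6)[OF m(3)] a h1_big by auto
      have e1: "{z,l2} \<in> snd G \<longleftrightarrow> {z,l2} \<in> snd G" by simp
      have e2: "{z,?x'} \<in> snd G \<longleftrightarrow> {z,h1} \<in> snd G" using out1[OF inA[OF m(2) an(2)] z(2)] .
      have d: "({l2,z} \<in> snd G) \<noteq> ({?x',z} \<in> snd G)" using e2 ne by (simp add: insert_commute)
      show "?f a \<noteq> ?f a'"
        by (rule EG_diff[OF F(7) F'(7) memC[OF m(1)] memU[OF m(3)] memA[OF m(2)] memU[OF m(3)]]) (use p d in simp_all)
    qed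
    have "?f a \<in> slice P n" if "a \<in> {0..<n}" for a using good_slice[OF g, of a "n - Suc a"] that by auto
    then have "?f ` {0..<n} \<subseteq> slice P n" by auto
    then show ?thesis using cnt1[OF her _ _ inj] by simp
  qed
qed

lemma at_pos:
  assumes g: "good L Mid U" and a: "a \<le> n" and c: "c \<le> n" and cd: "card L + a + card Mid + c + card U = n"
    and p: "1 \<le> p" "p \<le> n"
  shows "\<exists>u\<in>SS L Mid U a c. pos (SS L Mid U a c) u = p"
  using pos_surj[OF good_facts(7)[OF g a c]] good_facts(1)[OF g a c] cd p by simp

lemma in_blocks:
  assumes "u \<in> SS L Mid U a c" "u \<notin> L" "u \<notin> Mid" "u \<notin> U" "a \<le> n" "c \<le> n"
  shows "u \<in> {l1..h1} \<union> {l2..h2}"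
proof -
  have "u \<in> {Suc h1 - a..h1} \<or> u \<in> {l2..<l2+c}" using assms(1-4) unfolding fam_def by blast
  then show ?thesis using inA[OF _ assms(5)] inC[OF _ assms(6)] by blast
qed

definition modl :: bool where
  "modl \<longleftrightarrow> ({l1,h1} \<in> snd G \<longleftrightarrow> {h1,l2} \<in> snd G) \<and> ({l2,h2} \<in> snd G \<longleftrightarrow> {h1,l2} \<in> snd G) \<and>
     (\<forall>z\<in>{1..fst G}. z \<notin> {l1..h1} \<longrightarrow> z \<notin> {l2..h2} \<longrightarrow> ({z,h1} \<in> snd G \<longleftrightarrow> {z,l2} \<in> snd G))"

lemma M1:
  assumes "modl" "u \<in> {l1..h1} \<union> {l2..h2}" "u' \<in> {l1..h1} \<union> {l2..h2}" "u \<noteq> u'"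
  shows "{u,u'} \<in> snd G \<longleftrightarrow> {l1,h1} \<in> snd G"
  using assms in1 in2 cross[of u u'] cross[of u' u] unfolding modl_def by (auto simp: insert_commute)

lemma M2:
  assumes "modl" "z \<in> {1..fst G}" "z \<notin> {l1..h1} \<union> {l2..h2}" "u \<in> {l1..h1} \<union> {l2..h2}"
  shows "{z,u} \<in> snd G \<longleftrightarrow> {z,h1} \<in> snd G"
proof (cases "u \<in> {l1..h1}")
  case True then show ?thesis using out1[OF True] assms by auto
next
  case False
  then have "u \<in> {l2..h2}" using assms by auto
  then show ?thesis using out2[of u z] assms unfolding modl_def by auto
qed

lemma wit_in_G:
  assumes "({x,w} \<in> snd G) \<noteq> ({y,w} \<in> snd G)"
  shows "w \<in> {1..fst G}"
proof -
  have "{x,w} \<in> snd G \<or> {y,w} \<in> snd G" using assms by auto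
  then show ?thesis using ordered_graph_edge(3)[OF og] by blast
qed

lemma gap:
  assumes md: "modl" and nh: "\<not> hom G l1 (Suc h1)"
  shows "Suc h1 < l2"
proof (rule ccontr)
  assume "\<not> Suc h1 < l2"
  then have v: "Suc h1 = l2" using b2 by simp
  obtain x0 w where w: "x0 \<in> {l1..h1}" "w \<noteq> x0" "w \<noteq> Suc h1" "({x0,w} \<in> snd G) \<noteq> ({Suc h1, w} \<in> snd G)"
    using nonhom_witness[OF b1(2) nh] by blast
  have wG: "w \<in> {1..fst G}" using wit_in_G[OF w(4)] .
  have vB: "Suc h1 \<in> {l1..h1} \<union> {l2..h2}" using v h2_big by auto
  have x0B: "x0 \<in> {l1..h1} \<union> {l2..h2}" using w by auto
  show False
  proof (cases "w \<in> {l1..h1} \<union> {l2..h2}")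
    case True
    then show False using M1[OF md x0B True] M1[OF md vB True] w by auto
  next
    case False
    then show False using M2[OF md wG False x0B] M2[OF md wG False vB] w by (auto simp: insert_commute)
  qed
qed

lemma three_pick: "\<exists>j\<in>{1,2,3::nat}. j \<noteq> p \<and> j \<noteq> q"
  by (cases "p = 1"; cases "q = 1"; cases "p = 2"; cases "q = 2") auto

lemma case_iva:
  assumes md: "modl" and n3: "3 \<le> n" and z: "h1 < z" "z < l2" and ne: "({z,h1} \<in> snd G) \<noteq> ({l1,h1} \<in> snd G)"
  shows "n \<le> card (slice P n)"
proof -
  have g: "good {} {z} {}" unfolding good_def using z by auto
  have zG: "z \<in> {1..fst G}" "z \<notin> {l1..h1} \<union> {l2..h2}" using z b1 b2 h2_big by auto
  let ?S = "\<lambda>a. SS {} {z} {} a (n - Suc a)"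
  let ?f = "\<lambda>a. EG G (?S a)"
  have inj: "inj_on ?f {0..<n}"
  proof (rule inj_lt)
    fix a a' assume a: "a \<in> {0..<n}" "a' \<in> {0..<n}" "a < a'"
    have an: "a \<le> n" "a' \<le> n" "n - Suc a \<le> n" "n - Suc a' \<le> n" using a by auto
    have cd: "card {} + a + card {z} + (n - Suc a) + card {} = n" "card {} + a' + card {z} + (n - Suc a') + card {} = n"
      using a by auto
    note F = good_facts[OF g an(1) an(3)] and F' = good_facts[OF g an(2) an(4)]
    have pz: "pos (?S a) z = Suc a" "pos (?S a') z = Suc a'" using F(4) F'(4) by auto
    obtain j where j: "j \<in> {1,2,3}" "j \<noteq> Suc a" "j \<noteq> Suc a'" using three_pick by blast
    have jn: "1 \<le> j" "j \<le> n" using j n3 by auto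
    obtain u where u: "u \<in> ?S a" "pos (?S a) u = j" using at_pos[OF g an(1) an(3) cd(1) jn] by blast
    have sa: "1 \<le> Suc a" "Suc a \<le> n" using a by auto
    obtain u1 where u1: "u1 \<in> ?S a'" "pos (?S a') u1 = Suc a" using at_pos[OF g an(2) an(4) cd(2) sa] by blast
    obtain u2 where u2: "u2 \<in> ?S a'" "pos (?S a') u2 = j" using at_pos[OF g an(2) an(4) cd(2) jn] by blast
    have "u \<noteq> z" using u pz j by auto
    then have uB: "u \<in> {l1..h1} \<union> {l2..h2}" using in_blocks[OF u(1) _ _ _ an(1) an(3)] by auto
    have "u1 \<noteq> z" "u2 \<noteq> z" using u1 u2 pz j a by auto
    then have u12B: "u1 \<in> {l1..h1} \<union> {l2..h2}" "u2 \<in> {l1..h1} \<union> {l2..h2}"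
      using in_blocks[OF u1(1) _ _ _ an(2) an(4)] in_blocks[OF u2(1) _ _ _ an(2) an(4)] by auto
    have "u1 \<noteq> u2" using u1 u2 j by auto
    then have "{u1,u2} \<in> snd G \<longleftrightarrow> {l1,h1} \<in> snd G" using M1[OF md u12B] by simp
    moreover have "{z,u} \<in> snd G \<longleftrightarrow> {z,h1} \<in> snd G" using M2[OF md zG uB] .
    ultimately have d: "({z,u} \<in> snd G) \<noteq> ({u1,u2} \<in> snd G)" using ne by simp
    show "?f a \<noteq> ?f a'"
      by (rule EG_diff[OF F(7) F'(7) memM u(1) u1(1) u2(1)]) (use pz u u1 u2 d in simp_all)
  qed
  have "?f a \<in> slice P n" if "a \<in> {0..<n}" for a using good_slice[OF g, of a "n - Suc a"] that by auto
  then have "?f ` {0..<n} \<subseteq> slice P n" by auto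
  then show ?thesis using cnt1[OF her _ _ inj] by simp
qed

lemma case_ivb:
  assumes md: "modl" and n3: "3 \<le> n" and nh: "\<not> hom G l1 (Suc h1)"
    and gp: "\<forall>z. h1 < z \<and> z < l2 \<longrightarrow> ({z,h1} \<in> snd G \<longleftrightarrow> {l1,h1} \<in> snd G)"
  shows "n \<le> card (slice P n)"
proof -
  define t where "t = ({l1,h1} \<in> snd G)"
  define v where "v = Suc h1"
  have vgap: "h1 < v" "v < l2" using gap[OF md nh] unfolding v_def by auto
  obtain x0 w where w: "x0 \<in> {l1..h1}" "w \<noteq> x0" "w \<noteq> v" "({x0,w} \<in> snd G) \<noteq> ({v, w} \<in> snd G)"
    using nonhom_witness[OF b1(2) nh] unfolding v_def by blast
  have wG: "w \<in> {1..fst G}" using wit_in_G[OF w(4)] .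
  have vG: "v \<in> {1..fst G}" "v \<notin> {l1..h1} \<union> {l2..h2}" using vgap b1 b2 h2_big by auto
  have Qv: "{v,u} \<in> snd G \<longleftrightarrow> t" if "u \<in> {l1..h1} \<union> {l2..h2}" for u
  proof -
    have "{v,h1} \<in> snd G \<longleftrightarrow> t" using gp vgap unfolding t_def by blast
    then show ?thesis using M2[OF md vG that] by simp
  qed
  have x0B: "x0 \<in> {l1..h1} \<union> {l2..h2}" using w by auto
  have wnot: "w \<notin> {l1..h1} \<union> {l2..h2}"
  proof
    assume wB: "w \<in> {l1..h1} \<union> {l2..h2}"
    have "{x0,w} \<in> snd G \<longleftrightarrow> t" using M1[OF md x0B wB] w unfolding t_def by auto
    moreover have "{v,w} \<in> snd G \<longleftrightarrow> t" using Qv[OF wB] .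
    ultimately show False using w by simp
  qed
  have Wd: "({v,w} \<in> snd G) \<noteq> ({w,h1} \<in> snd G)"
    using M2[OF md wG wnot x0B] w by (simp add: insert_commute)
  have Mw: "{w,u} \<in> snd G \<longleftrightarrow> {w,h1} \<in> snd G" if "u \<in> {l1..h1} \<union> {l2..h2}" for u
    using M2[OF md wG wnot that] .
  have Qpair: "{u,u'} \<in> snd G \<longleftrightarrow> t" if uQ: "u \<in> insert v ({l1..h1} \<union> {l2..h2})"
    and uQ': "u' \<in> insert v ({l1..h1} \<union> {l2..h2})" and une: "u \<noteq> u'" for u u'
  proof -
    consider "u = v" | "u' = v" | "u \<in> {l1..h1} \<union> {l2..h2}" "u' \<in> {l1..h1} \<union> {l2..h2}"
      using uQ uQ' by blast
    then show ?thesis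
    proof cases
      case 1 then show ?thesis using Qv[of u'] uQ' une by auto
    next
      case 2 then show ?thesis using Qv[of u] uQ une by (auto simp: insert_commute)
    next
      case 3 then show ?thesis using M1[OF md 3 une] unfolding t_def by simp
    qed
  qed
  have gK: "good {} {} {}" unfolding good_def by simp
  have nn: "n \<le> n" "0 \<le> n" by auto
  have cdK: "card {} + n + card {} + 0 + card {} = n" by simp
  let ?K = "SS {} {} {} n 0"
  have FK: "finite ?K" using good_facts(7)[OF gK nn] .
  have Kslice: "EG G ?K \<in> slice P n" using good_slice[OF gK nn cdK] .
  have Kpair: "\<exists>k1\<in>?K. \<exists>k2\<in>?K. pos ?K k1 = p \<and> pos ?K k2 = q \<and> ({k1,k2} \<in> snd G \<longleftrightarrow> t)"
    if pq: "1 \<le> p" "p \<le> n" "1 \<le> q" "q \<le> n" "p \<noteq> q" for p q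
  proof -
    obtain k1 where k1: "k1 \<in> ?K" "pos ?K k1 = p" using at_pos[OF gK nn cdK pq(1,2)] by blast
    obtain k2 where k2: "k2 \<in> ?K" "pos ?K k2 = q" using at_pos[OF gK nn cdK pq(3,4)] by blast
    have "k1 \<in> {l1..h1} \<union> {l2..h2}" "k2 \<in> {l1..h1} \<union> {l2..h2}"
      using in_blocks[OF k1(1)] in_blocks[OF k2(1)] by auto
    moreover have "k1 \<noteq> k2" using k1 k2 pq by auto
    ultimately show ?thesis using M1[OF md] k1 k2 unfolding t_def by blast
  qed
  have wn: "\<not> (l1 \<le> w \<and> w \<le> h1)" "\<not> (l2 \<le> w \<and> w \<le> h2)" "w \<noteq> Suc h1" using wnot w v_def by auto
  have "w < l1 \<or> (v < w \<and> w < l2) \<or> h2 < w" using wn unfolding v_def by linarith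
  then consider "w < l1" | "v < w" "w < l2" | "h2 < w" by blast
  then show ?thesis
  proof cases
    case 2
    have g: "good {} {v,w} {}" unfolding good_def using vgap 2 by auto
    let ?S = "\<lambda>a. SS {} {v,w} {} a (n - Suc (Suc a))"
    let ?f = "\<lambda>a. EG G (?S a)"
    have Fa: "a \<le> n" "n - Suc (Suc a) \<le> n" "card {} + a + card {v,w} + (n - Suc (Suc a)) + card {} = n"
      if "a \<in> {0..<n-1}" for a using that 2 by auto
    have pv: "pos (?S a) v = Suc a" "pos (?S a) w = Suc (Suc a)" if "a \<in> {0..<n-1}" for a
    proof -
      have "{v,w} \<inter> {..v} = {v}" "{v,w} \<inter> {..w} = {v,w}" using 2 by auto
      then show "pos (?S a) v = Suc a" "pos (?S a) w = Suc (Suc a)"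
        using good_facts(4)[OF g Fa(1,2)[OF that], of v] good_facts(4)[OF g Fa(1,2)[OF that], of w] 2 by auto
    qed
    have dvw: "({v,w} \<in> snd G) \<noteq> t" using Wd gp 2 vgap unfolding t_def by auto
    have twoS: "\<exists>u1\<in>?S a'. \<exists>u2\<in>?S a'. pos (?S a') u1 = p \<and> pos (?S a') u2 = q \<and> ({u1,u2} \<in> snd G \<longleftrightarrow> t)"
      if a': "a' \<in> {0..<n-1}" and pq: "1 \<le> p" "p \<le> n" "1 \<le> q" "q \<le> n" "p \<noteq> q" "p \<noteq> Suc (Suc a')" "q \<noteq> Suc (Suc a')" for a' p q
    proof -
      obtain u1 where u1: "u1 \<in> ?S a'" "pos (?S a') u1 = p" using at_pos[OF g Fa[OF a']] pq by blast
      obtain u2 where u2: "u2 \<in> ?S a'" "pos (?S a') u2 = q" using at_pos[OF g Fa[OF a']] pq by blast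
      have "u1 \<noteq> w" "u2 \<noteq> w" using u1 u2 pv[OF a'] pq by auto
      then have "u1 \<in> insert v ({l1..h1} \<union> {l2..h2})" "u2 \<in> insert v ({l1..h1} \<union> {l2..h2})"
        using in_blocks[OF u1(1) _ _ _ Fa(1,2)[OF a']] in_blocks[OF u2(1) _ _ _ Fa(1,2)[OF a']] by auto
      moreover have "u1 \<noteq> u2" using u1 u2 pq by auto
      ultimately show ?thesis using Qpair u1 u2 by blast
    qed
    have inj: "inj_on ?f {0..<n-1}"
    proof (rule inj_lt)
      fix a a' assume a: "a \<in> {0..<n-1}" "a' \<in> {0..<n-1}" "a < a'"
      have pq: "1 \<le> Suc a" "Suc a \<le> n" "1 \<le> Suc (Suc a)" "Suc (Suc a) \<le> n" "Suc a \<noteq> Suc (Suc a)"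
        "Suc a \<noteq> Suc (Suc a')" "Suc (Suc a) \<noteq> Suc (Suc a')" using a by auto
      obtain u1 u2 where u: "u1 \<in> ?S a'" "u2 \<in> ?S a'" "pos (?S a') u1 = Suc a" "pos (?S a') u2 = Suc (Suc a)"
        "{u1,u2} \<in> snd G \<longleftrightarrow> t" using twoS[OF a(2) pq] by blast
      have m: "v \<in> ?S a" "w \<in> ?S a" using memM[of v "{v,w}"] memM[of w "{v,w}"] by auto
      show "?f a \<noteq> ?f a'"
        by (rule EG_diff[OF good_facts(7)[OF g Fa(1,2)[OF a(1)]] good_facts(7)[OF g Fa(1,2)[OF a(2)]] m u(1,2)])
          (use pv[OF a(1)] u dvw in simp_all)
    qed
    have sl: "?f ` {0..<n-1} \<subseteq> slice P n" using good_slice[OF g Fa(1,2) Fa(3)] by auto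
    have notK: "EG G ?K \<notin> ?f ` {0..<n-1}"
    proof
      assume "EG G ?K \<in> ?f ` {0..<n-1}"
      then obtain a where a: "a \<in> {0..<n-1}" "?f a = EG G ?K" by blast
      obtain k1 k2 where k: "k1 \<in> ?K" "k2 \<in> ?K" "pos ?K k1 = Suc a" "pos ?K k2 = Suc (Suc a)"
        "{k1,k2} \<in> snd G \<longleftrightarrow> t"
      proof -
        have pq: "1 \<le> Suc a" "Suc a \<le> n" "1 \<le> Suc (Suc a)" "Suc (Suc a) \<le> n" "Suc a \<noteq> Suc (Suc a)"
          using a by auto
        show ?thesis using Kpair[OF pq] that by blast
      qed
      have m: "v \<in> ?S a" "w \<in> ?S a" using memM[of v "{v,w}"] memM[of w "{v,w}"] by auto
      have "?f a \<noteq> EG G ?K"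
        by (rule EG_diff[OF good_facts(7)[OF g Fa(1,2)[OF a(1)]] FK m k(1,2)])
          (use pv[OF a(1)] k dvw in simp_all)
      then show False using a by simp
    qed
    show ?thesis using cnt2[OF her _ _ inj sl Kslice notK] n3 by simp
  next
    case 1
    have g: "good {w} {v} {}" unfolding good_def using vgap 1 wG by auto
    let ?S = "\<lambda>a. SS {w} {v} {} a (n - Suc (Suc a))"
    let ?f = "\<lambda>a. EG G (?S a)"
    have Fa: "a \<le> n" "n - Suc (Suc a) \<le> n" "card {w} + a + card {v} + (n - Suc (Suc a)) + card {} = n"
      if "a \<in> {0..<n-1}" for a using that by auto
    have pv: "pos (?S a) w = 1" "pos (?S a) v = Suc (Suc a)" if "a \<in> {0..<n-1}" for a
      using good_facts(2)[OF g Fa(1,2)[OF that], of w] good_facts(4)[OF g Fa(1,2)[OF that], of v] by auto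
    have m: "w \<in> ?S a" "v \<in> ?S a" for a using memL[of w "{w}"] memM[of v "{v}"] by auto
    have other: "\<exists>u\<in>?S a. pos (?S a) u = j \<and> ({w,u} \<in> snd G \<longleftrightarrow> {w,h1} \<in> snd G)"
      if a: "a \<in> {0..<n-1}" and j: "1 \<le> j" "j \<le> n" "j \<noteq> 1" "j \<noteq> Suc (Suc a)" for a j
    proof -
      obtain u where u: "u \<in> ?S a" "pos (?S a) u = j" using at_pos[OF g Fa[OF a] j(1,2)] by blast
      have "u \<noteq> w" "u \<noteq> v" using u pv[OF a] j by auto
      then have "u \<in> {l1..h1} \<union> {l2..h2}" using in_blocks[OF u(1) _ _ _ Fa(1,2)[OF a]] by auto
      then show ?thesis using Mw u by blast
    qed
    have inj: "inj_on ?f {0..<n-1}"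
    proof (rule inj_lt)
      fix a a' assume a: "a \<in> {0..<n-1}" "a' \<in> {0..<n-1}" "a < a'"
      have j: "1 \<le> Suc (Suc a)" "Suc (Suc a) \<le> n" "Suc (Suc a) \<noteq> 1" "Suc (Suc a) \<noteq> Suc (Suc a')" using a by auto
      obtain u where u: "u \<in> ?S a'" "pos (?S a') u = Suc (Suc a)" "{w,u} \<in> snd G \<longleftrightarrow> {w,h1} \<in> snd G"
        using other[OF a(2) j] by blast
      have d: "({w,v} \<in> snd G) \<noteq> ({w,u} \<in> snd G)" using u(3) Wd by (simp add: insert_commute)
      show "?f a \<noteq> ?f a'"
        by (rule EG_diff[OF good_facts(7)[OF g Fa(1,2)[OF a(1)]] good_facts(7)[OF g Fa(1,2)[OF a(2)]] m(1) m(2) m(1) u(1)])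
          (use pv[OF a(1)] pv[OF a(2)] u d in simp_all)
    qed
    have sl: "?f ` {0..<n-1} \<subseteq> slice P n" using good_slice[OF g Fa(1,2) Fa(3)] by auto
    have notK: "EG G ?K \<notin> ?f ` {0..<n-1}"
    proof
      assume "EG G ?K \<in> ?f ` {0..<n-1}"
      then obtain a where a: "a \<in> {0..<n-1}" "?f a = EG G ?K" by blast
      have "?f a \<noteq> EG G ?K"
      proof (cases "({w,v} \<in> snd G) = t")
        case False
        have pq: "(1::nat) \<le> 1" "1 \<le> n" "1 \<le> Suc (Suc a)" "Suc (Suc a) \<le> n" "1 \<noteq> Suc (Suc a)" using a by auto
        obtain k1 k2 where k: "k1 \<in> ?K" "k2 \<in> ?K" "pos ?K k1 = 1" "pos ?K k2 = Suc (Suc a)"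
          "{k1,k2} \<in> snd G \<longleftrightarrow> t" using Kpair[OF pq] by blast
        show ?thesis
          by (rule EG_diff[OF good_facts(7)[OF g Fa(1,2)[OF a(1)]] FK m(1) m(2) k(1,2)])
            (use pv[OF a(1)] k False in simp_all)
      next
        case True
        then have wt: "({w,h1} \<in> snd G) \<noteq> t" using Wd by (simp add: insert_commute)
        obtain j where j0: "j \<in> {1,2,3}" "j \<noteq> 1" "j \<noteq> Suc (Suc a)" using three_pick by blast
        have j: "1 \<le> j" "j \<le> n" "j \<noteq> 1" "j \<noteq> Suc (Suc a)" using j0 n3 by auto
        obtain u where u: "u \<in> ?S a" "pos (?S a) u = j" "{w,u} \<in> snd G \<longleftrightarrow> {w,h1} \<in> snd G"
          using other[OF a(1) j] by blast
        have pq: "(1::nat) \<le> 1" "1 \<le> n" "1 \<le> j" "j \<le> n" "1 \<noteq> j" using j n3 by auto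
        obtain k1 k2 where k: "k1 \<in> ?K" "k2 \<in> ?K" "pos ?K k1 = 1" "pos ?K k2 = j"
          "{k1,k2} \<in> snd G \<longleftrightarrow> t" using Kpair[OF pq] by blast
        show ?thesis
          by (rule EG_diff[OF good_facts(7)[OF g Fa(1,2)[OF a(1)]] FK m(1) u(1) k(1,2)])
            (use pv[OF a(1)] u k wt in simp_all)
      qed
      then show False using a by simp
    qed
    show ?thesis using cnt2[OF her _ _ inj sl Kslice notK] n3 by simp
  next
    case 3
    have g: "good {} {v} {w}" unfolding good_def using vgap 3 wG by auto
    let ?S = "\<lambda>a. SS {} {v} {w} a (n - Suc (Suc a))"
    let ?f = "\<lambda>a. EG G (?S a)"
    have Fa: "a \<le> n" "n - Suc (Suc a) \<le> n" "card {} + a + card {v} + (n - Suc (Suc a)) + card {w} = n"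
      if "a \<in> {0..<n-1}" for a using that by auto
    have pv: "pos (?S a) v = Suc a" "pos (?S a) w = n" if "a \<in> {0..<n-1}" for a
      using good_facts(4)[OF g Fa(1,2)[OF that], of v] good_facts(6)[OF g Fa(1,2)[OF that], of w] that by auto
    have m: "v \<in> ?S a" "w \<in> ?S a" for a using memM[of v "{v}"] memU[of w "{w}"] by auto
    have other: "\<exists>u\<in>?S a. pos (?S a) u = j \<and> ({u,w} \<in> snd G \<longleftrightarrow> {w,h1} \<in> snd G)"
      if a: "a \<in> {0..<n-1}" and j: "1 \<le> j" "j < n" "j \<noteq> Suc a" for a j
    proof -
      have jj: "1 \<le> j" "j \<le> n" using j by auto
      obtain u where u: "u \<in> ?S a" "pos (?S a) u = j" using at_pos[OF g Fa[OF a] jj] by blast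
      have "u \<noteq> w" "u \<noteq> v" using u pv[OF a] j by auto
      then have "u \<in> {l1..h1} \<union> {l2..h2}" using in_blocks[OF u(1) _ _ _ Fa(1,2)[OF a]] by auto
      then show ?thesis using Mw u by (auto simp: insert_commute)
    qed
    have inj: "inj_on ?f {0..<n-1}"
    proof (rule inj_lt)
      fix a a' assume a: "a \<in> {0..<n-1}" "a' \<in> {0..<n-1}" "a < a'"
      have j: "1 \<le> Suc a" "Suc a < n" "Suc a \<noteq> Suc a'" using a by auto
      obtain u where u: "u \<in> ?S a'" "pos (?S a') u = Suc a" "{u,w} \<in> snd G \<longleftrightarrow> {w,h1} \<in> snd G"
        using other[OF a(2) j] by blast
      have d: "({v,w} \<in> snd G) \<noteq> ({u,w} \<in> snd G)" using u(3) Wd by simp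
      show "?f a \<noteq> ?f a'"
        by (rule EG_diff[OF good_facts(7)[OF g Fa(1,2)[OF a(1)]] good_facts(7)[OF g Fa(1,2)[OF a(2)]] m(1) m(2) u(1) m(2)])
          (use pv[OF a(1)] pv[OF a(2)] u d in simp_all)
    qed
    have sl: "?f ` {0..<n-1} \<subseteq> slice P n" using good_slice[OF g Fa(1,2) Fa(3)] by auto
    have notK: "EG G ?K \<notin> ?f ` {0..<n-1}"
    proof
      assume "EG G ?K \<in> ?f ` {0..<n-1}"
      then obtain a where a: "a \<in> {0..<n-1}" "?f a = EG G ?K" by blast
      have "?f a \<noteq> EG G ?K"
      proof (cases "({v,w} \<in> snd G) = t")
        case False
        have pq: "1 \<le> Suc a" "Suc a \<le> n" "1 \<le> n" "n \<le> n" "Suc a \<noteq> n" using a by auto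
        obtain k1 k2 where k: "k1 \<in> ?K" "k2 \<in> ?K" "pos ?K k1 = Suc a" "pos ?K k2 = n"
          "{k1,k2} \<in> snd G \<longleftrightarrow> t" using Kpair[OF pq] by blast
        show ?thesis
          by (rule EG_diff[OF good_facts(7)[OF g Fa(1,2)[OF a(1)]] FK m(1) m(2) k(1,2)])
            (use pv[OF a(1)] k False in simp_all)
      next
        case True
        then have wt: "({w,h1} \<in> snd G) \<noteq> t" using Wd by simp
        obtain j where j0: "j \<in> {1,2,3}" "j \<noteq> Suc a" "j \<noteq> n" using three_pick by blast
        have j: "1 \<le> j" "j < n" "j \<noteq> Suc a" using j0 n3 by auto
        obtain u where u: "u \<in> ?S a" "pos (?S a) u = j" "{u,w} \<in> snd G \<longleftrightarrow> {w,h1} \<in> snd G"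
          using other[OF a(1) j] by blast
        have pq: "1 \<le> j" "j \<le> n" "1 \<le> n" "n \<le> n" "j \<noteq> n" using j by auto
        obtain k1 k2 where k: "k1 \<in> ?K" "k2 \<in> ?K" "pos ?K k1 = j" "pos ?K k2 = n"
          "{k1,k2} \<in> snd G \<longleftrightarrow> t" using Kpair[OF pq] by blast
        show ?thesis
          by (rule EG_diff[OF good_facts(7)[OF g Fa(1,2)[OF a(1)]] FK u(1) m(2) k(1,2)])
            (use pv[OF a(1)] u k wt in simp_all)
      qed
      then show False using a by simp
    qed
    show ?thesis using cnt2[OF her _ _ inj sl Kslice notK] n3 by simp
  qed
qed

lemma k1_main:
  assumes nh: "\<not> hom G l1 (Suc h1)" and n3: "3 \<le> n"
  shows "n \<le> card (slice P n)"
proof (cases "({l1,h1} \<in> snd G) \<noteq> ({h1,l2} \<in> snd G)")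
  case True then show ?thesis using case_i by blast
next
  case F1: False
  show ?thesis
  proof (cases "({l2,h2} \<in> snd G) \<noteq> ({h1,l2} \<in> snd G)")
    case True then show ?thesis using case_ii by blast
  next
    case F2: False
    show ?thesis
    proof (cases "\<exists>z\<in>{1..fst G}. z \<notin> {l1..h1} \<and> z \<notin> {l2..h2} \<and> ({z,h1} \<in> snd G) \<noteq> ({z,l2} \<in> snd G)")
      case True then show ?thesis using case_iii by blast
    next
      case F3: False
      have md: "modl" unfolding modl_def using F1 F2 F3 by blast
      show ?thesis
      proof (cases "\<exists>z. h1 < z \<and> z < l2 \<and> ({z,h1} \<in> snd G) \<noteq> ({l1,h1} \<in> snd G)")
        case True then show ?thesis using case_iva[OF md n3] by blast
      next
        case False
        then have "\<forall>z. h1 < z \<and> z < l2 \<longrightarrow> ({z,h1} \<in> snd G \<longleftrightarrow> {l1,h1} \<in> snd G)" by blast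
        then show ?thesis using case_ivb[OF md n3 nh] by blast
      qed
    qed
  qed
qed

end




lemma EG_pair:
  assumes og: "ordered_graph G" and xy: "x \<noteq> y"
  shows "EG G {x,y} \<noteq> {} \<longleftrightarrow> {x,y} \<in> snd G"
proof
  assume "EG G {x,y} \<noteq> {}"
  then obtain a b where ab: "a \<in> {x,y}" "b \<in> {x,y}" "{a,b} \<in> snd G" unfolding EG_def by blast
  have "a \<noteq> b" using ordered_graph_edge(1)[OF og ab(3)] .
  then have "{a,b} = {x,y}" using ab(1,2) by auto
  then show "{x,y} \<in> snd G" using ab(3) by simp
next
  assume "{x,y} \<in> snd G"
  then have "{pos {x,y} x, pos {x,y} y} \<in> EG G {x,y}" using EG_mem[of "{x,y}" x y G] by simp
  then show "EG G {x,y} \<noteq> {}" by blast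
qed

lemma k1_all:
  assumes her: "hereditary P" and hb: "\<forall>m. \<exists>G\<in>P. hb_seq G (1+1) \<ge> m"
  shows "n \<le> card (slice P n)"
proof -
  obtain G lo hi where G: "G \<in> P" "ordered_graph G"
    and bl: "\<forall>j\<le>1. 1 \<le> lo j \<and> lo j \<le> hi j \<and> hi j \<le> fst G \<and> hom G (lo j) (hi j) \<and> n + 3 \<le> Suc (hi j) - lo j"
    and od: "\<forall>j<1. hi j < lo (Suc j) \<and> \<not> hom G (lo j) (Suc (hi j))"
  proof -
    have "(1::nat) \<le> n + 3" by simp
    from extract_blocks[OF her hb this] show ?thesis using that by blast
  qed
  have b1: "1 \<le> lo 0" "hom G (lo 0) (hi 0)" "n + 3 \<le> Suc (hi 0) - lo 0" using bl by auto
  have b2: "hi 0 < lo 1" "hi 1 \<le> fst G" "hom G (lo 1) (hi 1)" "n + 3 \<le> Suc (hi 1) - lo 1" using bl od by auto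
  have nh: "\<not> hom G (lo 0) (Suc (hi 0))" using od by auto
  have fin: "finite (slice P n)" using slice_finite[OF her] .
  consider "n = 0" | "n = 1" | "n = 2" | "3 \<le> n" by linarith
  then show ?thesis
  proof cases
    case 1 then show ?thesis by simp
  next
    case 2
    have "{hi 0} \<subseteq> {1..fst G}" using bl by auto
    then have "(card {hi 0}, EG G {hi 0}) \<in> P" using EG_in_P[OF her G(1)] by blast
    then have "EG G {hi 0} \<in> slice P n" using 2 unfolding slice_def by simp
    then have "slice P n \<noteq> {}" by blast
    then show ?thesis using 2 fin by (simp add: Suc_leI card_gt_0_iff)
  next
    case 3
    obtain x0 w where w: "x0 \<in> {lo 0..hi 0}" "w \<noteq> x0" "w \<noteq> Suc (hi 0)"
      "({x0,w} \<in> snd G) \<noteq> ({Suc (hi 0), w} \<in> snd G)"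
      using nonhom_witness[OF b1(2) nh] by blast
    have "{x0,w} \<in> snd G \<or> {Suc (hi 0), w} \<in> snd G" using w by auto
    then have wG: "w \<in> {1..fst G}" using ordered_graph_edge(3)[OF G(2)] by blast
    have s1: "{x0,w} \<subseteq> {1..fst G}" using w wG bl by fastforce
    have s2: "{Suc (hi 0), w} \<subseteq> {1..fst G}" using wG bl od by fastforce
    have c1: "card {x0,w} = n" "card {Suc (hi 0), w} = n" using w 3 by auto
    have e1: "EG G {x0,w} \<in> slice P n" using EG_in_P[OF her G(1) s1] c1 unfolding slice_def by simp
    have e2: "EG G {Suc (hi 0), w} \<in> slice P n" using EG_in_P[OF her G(1) s2] c1 unfolding slice_def by simp
    have "EG G {x0,w} \<noteq> EG G {Suc (hi 0), w}"
      using EG_pair[OF G(2), of x0 w] EG_pair[OF G(2), of "Suc (hi 0)" w] w by auto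
    then have "card {EG G {x0,w}, EG G {Suc (hi 0), w}} = 2" by simp
    moreover have "{EG G {x0,w}, EG G {Suc (hi 0), w}} \<subseteq> slice P n" using e1 e2 by simp
    ultimately have "2 \<le> card (slice P n)" using card_mono[OF fin] by metis
    then show ?thesis using 3 by simp
  next
    case 4
    show ?thesis using k1_main[OF her G(1) G(2) b1 b2 nh 4] .
  qed
qed

theorem lemma9:
  fixes P :: "ograph set" and k :: nat
  assumes "hereditary P"
    and "k \<ge> 1"
    and "\<forall>m. \<exists>G \<in> P. hb_seq G (k + 1) \<ge> m"
  shows "(\<forall>n. card (slice P n) \<ge> (n - (3 * k + 2)) choose k)
         \<and> (k = 1 \<longrightarrow> (\<forall>n. card (slice P n) \<ge> n))"
proof (intro conjI allI impI)
  fix n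
  obtain G lo hi where G: "G \<in> P" "ordered_graph G"
    and bl: "\<forall>j\<le>k. 1 \<le> lo j \<and> lo j \<le> hi j \<and> hi j \<le> fst G \<and> hom G (lo j) (hi j) \<and> n + 2*k \<le> Suc (hi j) - lo j"
    and od: "\<forall>j<k. hi j < lo (Suc j) \<and> \<not> hom G (lo j) (Suc (hi j))"
  proof -
    have "1 \<le> n + 2*k" using assms(2) by simp
    from extract_blocks[OF assms(1) assms(3) this] show ?thesis using that by blast
  qed
  show "(n - (3 * k + 2)) choose k \<le> card (slice P n)"
    using general_bound[OF assms(1) G(1) G(2) assms(2) bl od] .
next
  fix n assume "k = 1"
  then show "n \<le> card (slice P n)" using k1_all[OF assms(1)] assms(3) by simp
qed


end
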